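(* Let $n\ge 2$ and let $\Delta'$ be the simplicial complex on the vertex set $\{(i,j)\in[n]^2: i\ne j\}$ whose faces are the sets $F$ such that $\prod_{(i,j)\in F}x_{ij}\notin H(2,n)$, where $H(2,n)$ is as described in the context. Order the facets of $\Delta'$ as follows: if $F$ is a facet of $\Delta_R$ and $G$ is a facet of $\Delta_S$, then $F<G$ iff $R<S$ in the order on subsets described in the context, or $R=S$ and $F<G$ in the standard order of paths of the grid $R\times([n]\setminus R)$. Then this total order is a two-way shelling of $\Delta'$ (both it and its reverse are shellings). More precisely, for every facet $F$ of $\Delta'$ that is not the minimal facet, $$\langle F\rangle\cap\langle G: G<F\rangle=\langle F\setminus\{x\}: x\in F^-\rangle,$$ and for every facet $F$ that is not the maximal facet, $$\langle F\rangle\cap\langle G: G>F\rangle=\langle F\setminus\{x\}: x\in F^+\rangle.$$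
   Context: $H(2,n)\subset K[x_{ij}:1\le i,j\le n]$ is the monomial ideal generated by, for all $i<h$ and $j<k$: $x_{ik}x_{hj}$ whenever $i=j$ or $h=k$, and $x_{ij}x_{hk}$ whenever $i\ne j$ and $h\ne k$. For sets $F_1,\dots,F_k$, $\langle F_1,\dots,F_k\rangle$ denotes the smallest simplicial complex containing them. For a nonempty proper subset $R\subset[n]$, $\Delta_R=\{F\in\Delta': F\subseteq R\times([n]\setminus R)\}$. Write $R=\{r_1<\dots<r_p\}$, $[n]\setminus R=\{c_1<\dots<c_{q}\}$ and view $R\times([n]\setminus R)$ as a grid with row $r_1$ on top and column $c_1$ on the left. A path in this grid is a sequence of positions starting at $(r_p,c_1)$ (bottom left) and ending at $(r_1,c_q)$ (top right), each step going either horizontally right ($(r_a,c_b)\to(r_a,c_{b+1})$) or vertically up ($(r_a,c_b)\to(r_{a-1},c_b)$). It is a fact (established in the paper) that the facets of $\Delta_R$ are exactly these paths, and every facet of $\Delta'$ is a facet of $\Delta_R$ for exactly one $R$. Types of points of a path $F$: a point is a left turn if the step into it is horizontal and the step out of it is vertical; a right turn if the step into it is vertical and the step out is horizontal; every other point is the only point of $F$ in its column (type $\bullet$) or the only point of $F$ in its row (type $\circ$) (if both hold, i.e. the grid is $1\times1$, the point is regarded as type $\bullet$). Order on nonempty proper subsets written as increasing sequences: $S=\{a_1<\dots<a_s\}<R=\{b_1<\dots<b_t\}$ iff either $a_j<b_j$ for the smallest $j$ with $a_j\ne b_j$, or $s<t$ and $a_i=b_i$ for $i=1,\dots,s$. Standard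 order of paths in a fixed grid: $F<G$ iff at the first step (going from bottom left to top right) where they differ, the step of $F$ is vertical (and that of $G$ horizontal). For a facet $F$ of $\Delta_R$: $F^-$ consists of the left turns of $F$, the points of type $\bullet$ whose column index is $<\max(R)$, and the points of type $\circ$ whose row index is $\max(R)$; $F^+=F\setminus F^-$. *)

theory Defs
  imports "HOL-Library.Multiset"
begin

definition offdiag :: "nat \<Rightarrow> (nat \<times> nat) set" where
  "offdiag n = {(i,j). i \<in> {1..n} \<and> j \<in> {1..n} \<and> i \<noteq> j}"

text \<open>Monomials in the variables x_ij are represented by their exponent multisets
  over the index pairs (i,j). A monomial ideal is given by its set of monomial
  generators; a monomial lies in the monomial ideal iff some generator divides it.\<close>
definition in_monomial_ideal :: "'a multiset set \<Rightarrow> 'a multiset \<Rightarrow> bool" where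
  "in_monomial_ideal G m \<longleftrightarrow> (\<exists>g\<in>G. g \<subseteq># m)"

definition H2_gens :: "nat \<Rightarrow> (nat \<times> nat) multiset set" where
  "H2_gens n =
     {{#(i,k), (h,j)#} | i h j k. i \<in> {1..n} \<and> h \<in> {1..n} \<and> j \<in> {1..n} \<and> k \<in> {1..n}
          \<and> i < h \<and> j < k \<and> (i = j \<or> h = k)}
   \<union> {{#(i,j), (h,k)#} | i h j k. i \<in> {1..n} \<and> h \<in> {1..n} \<and> j \<in> {1..n} \<and> k \<in> {1..n}
          \<and> i < h \<and> j < k \<and> i \<noteq> j \<and> h \<noteq> k}"

definition Delta' :: "nat \<Rightarrow> (nat \<times> nat) set set" where
  "Delta' n = {F. F \<subseteq> offdiag n \<and> \<not> in_monomial_ideal (H2_gens n) (mset_set F)}"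

definition facets :: "'a set set \<Rightarrow> 'a set set" where
  "facets D = {F \<in> D. \<forall>G\<in>D. F \<subseteq> G \<longrightarrow> G = F}"

definition gen_complex :: "'a set set \<Rightarrow> 'a set set" where
  "gen_complex X = {H. \<exists>G\<in>X. H \<subseteq> G}"

definition DeltaR :: "nat \<Rightarrow> nat set \<Rightarrow> (nat \<times> nat) set set" where
  "DeltaR n R = {F \<in> Delta' n. F \<subseteq> R \<times> ({1..n} - R)}"

text \<open>Grid coordinates: rows r_1<...<r_p, columns c_1<...<c_q (0-indexed lists).\<close>
definition grid_rows :: "nat set \<Rightarrow> nat list" where
  "grid_rows R = sorted_list_of_set R"

definition grid_cols :: "nat \<Rightarrow> nat set \<Rightarrow> nat list" where
  "grid_cols n R = sorted_list_of_set ({1..n} - R)"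

text \<open>A path is encoded by its list of steps: True = vertical (up), False = horizontal (right).
  walk lists the index positions (row index, column index), 0-indexed.\<close>
fun walk :: "nat \<times> nat \<Rightarrow> bool list \<Rightarrow> (nat \<times> nat) list" where
  "walk (a,b) [] = [(a,b)]"
| "walk (a,b) (v # s) = (a,b) # walk (if v then (a - 1, b) else (a, b + 1)) s"

definition is_path_steps :: "nat \<Rightarrow> nat \<Rightarrow> bool list \<Rightarrow> bool" where
  "is_path_steps p q s \<longleftrightarrow> length s = (p - 1) + (q - 1) \<and> length (filter id s) = p - 1"

definition path_walk :: "nat set \<Rightarrow> bool list \<Rightarrow> (nat \<times> nat) list" where
  "path_walk R s = walk (card R - 1, 0) s"

definition path_pt :: "nat \<Rightarrow> nat set \<Rightarrow> nat \<times> nat \<Rightarrow> nat \<times> nat" where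
  "path_pt n R ab = (grid_rows R ! fst ab, grid_cols n R ! snd ab)"

definition path_set :: "nat \<Rightarrow> nat set \<Rightarrow> bool list \<Rightarrow> (nat \<times> nat) set" where
  "path_set n R s = path_pt n R ` set (path_walk R s)"

definition block :: "nat \<Rightarrow> (nat \<times> nat) set \<Rightarrow> nat set" where
  "block n F = (THE R. R \<noteq> {} \<and> R \<subset> {1..n} \<and> F \<in> facets (DeltaR n R))"

definition path_of :: "nat \<Rightarrow> (nat \<times> nat) set \<Rightarrow> bool list" where
  "path_of n F = (let R = block n F in
     THE s. is_path_steps (card R) (card ({1..n} - R)) s \<and> path_set n R s = F)"

definition subset_less :: "nat set \<Rightarrow> nat set \<Rightarrow> bool" where
  "subset_less S R \<longleftrightarrow> (let a = sorted_list_of_set S; b = sorted_list_of_set R in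
     (\<exists>j. j < length a \<and> j < length b \<and> take j a = take j b \<and> a ! j < b ! j)
     \<or> (length a < length b \<and> a = take (length a) b))"

definition steps_less :: "bool list \<Rightarrow> bool list \<Rightarrow> bool" where
  "steps_less s t \<longleftrightarrow> (\<exists>k. k < length s \<and> k < length t \<and> take k s = take k t \<and> s ! k \<and> \<not> t ! k)"

definition facet_less :: "nat \<Rightarrow> (nat \<times> nat) set \<Rightarrow> (nat \<times> nat) set \<Rightarrow> bool" where
  "facet_less n F G \<longleftrightarrow> subset_less (block n F) (block n G)
     \<or> (block n F = block n G \<and> steps_less (path_of n F) (path_of n G))"

definition left_turn :: "bool list \<Rightarrow> nat \<Rightarrow> bool" where
  "left_turn s k \<longleftrightarrow> 0 < k \<and> k < length s \<and> \<not> s ! (k - 1) \<and> s ! k"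

definition right_turn :: "bool list \<Rightarrow> nat \<Rightarrow> bool" where
  "right_turn s k \<longleftrightarrow> 0 < k \<and> k < length s \<and> s ! (k - 1) \<and> \<not> s ! k"

definition only_in_col :: "(nat \<times> nat) list \<Rightarrow> nat \<Rightarrow> bool" where
  "only_in_col w k \<longleftrightarrow> (\<forall>k'<length w. snd (w ! k') = snd (w ! k) \<longrightarrow> k' = k)"

definition only_in_row :: "(nat \<times> nat) list \<Rightarrow> nat \<Rightarrow> bool" where
  "only_in_row w k \<longleftrightarrow> (\<forall>k'<length w. fst (w ! k') = fst (w ! k) \<longrightarrow> k' = k)"

definition bullet_pt :: "bool list \<Rightarrow> (nat \<times> nat) list \<Rightarrow> nat \<Rightarrow> bool" where
  "bullet_pt s w k \<longleftrightarrow> \<not> left_turn s k \<and> \<not> right_turn s k \<and> only_in_col w k"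

definition circle_pt :: "bool list \<Rightarrow> (nat \<times> nat) list \<Rightarrow> nat \<Rightarrow> bool" where
  "circle_pt s w k \<longleftrightarrow> \<not> left_turn s k \<and> \<not> right_turn s k \<and> \<not> only_in_col w k \<and> only_in_row w k"

definition minus_part :: "nat \<Rightarrow> (nat \<times> nat) set \<Rightarrow> (nat \<times> nat) set" where
  "minus_part n F = (let R = block n F; s = path_of n F; w = path_walk R s in
     {path_pt n R (w ! k) | k. k < length w \<and>
        (left_turn s k
         \<or> (bullet_pt s w k \<and> grid_cols n R ! snd (w ! k) < Max R)
         \<or> (circle_pt s w k \<and> grid_rows R ! fst (w ! k) = Max R))})"

definition plus_part :: "nat \<Rightarrow> (nat \<times> nat) set \<Rightarrow> (nat \<times> nat) set" where
  "plus_part n F = F - minus_part n F"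

end

theory Submission
  imports Defs
begin

definition face :: "nat \<Rightarrow> (nat \<times> nat) set \<Rightarrow> bool" where
  "face n F \<longleftrightarrow> F \<subseteq> {1..n} \<times> {1..n} \<and> fst ` F \<inter> snd ` F = {}
     \<and> (\<forall>x\<in>F. \<forall>y\<in>F. \<not> (fst x < fst y \<and> snd x < snd y))"

lemma sub_mset_pair:
  assumes "finite F" "u \<noteq> v"
  shows "{#u, v#} \<subseteq># mset_set F \<longleftrightarrow> u \<in> F \<and> v \<in> F"
proof
  assume "{#u, v#} \<subseteq># mset_set F"
  then have "set_mset {#u, v#} \<subseteq> set_mset (mset_set F)" by (rule set_mset_mono)
  then show "u \<in> F \<and> v \<in> F" using assms by auto
next
  assume "u \<in> F \<and> v \<in> F"
  then have sub: "{u,v} \<subseteq> F" by auto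
  have "mset_set {u,v} \<subseteq># mset_set F"
    by (rule subset_imp_msubset_mset_set[OF sub assms(1)])
  moreover have "mset_set {u,v} = {#u, v#}" using assms by simp
  ultimately show "{#u, v#} \<subseteq># mset_set F" by simp
qed

lemma Delta'_face: "F \<in> Delta' n \<longleftrightarrow> face n F"
proof
  assume A: "F \<in> Delta' n"
  then have off: "F \<subseteq> offdiag n" and ni: "\<not> in_monomial_ideal (H2_gens n) (mset_set F)"
    by (auto simp: Delta'_def)
  have fin: "finite F"
    by (rule finite_subset[OF off]) (auto simp: offdiag_def intro: finite_subset[of _ "{1..n}\<times>{1..n}"])
  have gen: "\<not> ({#u, v#} \<in> H2_gens n \<and> u \<in> F \<and> v \<in> F)" if "u \<noteq> v" for u v
    using ni sub_mset_pair[OF fin that] by (auto simp: in_monomial_ideal_def)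
  have sq: "F \<subseteq> {1..n} \<times> {1..n}" using off by (auto simp: offdiag_def)
  have od: "\<And>a b. (a,b) \<in> F \<Longrightarrow> a \<noteq> b" using off by (auto simp: offdiag_def)
  have anti: "\<not> (fst x < fst y \<and> snd x < snd y)" if "x \<in> F" "y \<in> F" for x y
  proof
    assume c: "fst x < fst y \<and> snd x < snd y"
    obtain i j where x: "x = (i,j)" by (cases x)
    obtain h k where y: "y = (h,k)" by (cases y)
    have "{#(i,j), (h,k)#} \<in> H2_gens n"
      unfolding H2_gens_def
      by (intro UnI2 CollectI exI[of _ i] exI[of _ h] exI[of _ j] exI[of _ k])
         (use c x y that sq od in \<open>auto\<close>)
    then show False using gen[of "(i,j)" "(h,k)"] c x y that by auto
  qed
  have disj: "fst ` F \<inter> snd ` F = {}"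
  proof (rule ccontr)
    assume "fst ` F \<inter> snd ` F \<noteq> {}"
    then obtain a k h where ak: "(a,k) \<in> F" and ha: "(h,a) \<in> F" by force
    have "a \<noteq> k" "h \<noteq> a" using od ak ha by auto
    have r: "a \<in> {1..n}" "k \<in> {1..n}" "h \<in> {1..n}" using sq ak ha by auto
    consider "h < a" "k < a" | "h < a" "a < k" | "a < h" "a < k" | "a < h" "k < a"
      using \<open>a \<noteq> k\<close> \<open>h \<noteq> a\<close> by linarith
    then show False
    proof cases
      case 1
      have "{#(h,a), (a,k)#} \<in> H2_gens n" unfolding H2_gens_def
        by (intro UnI1 CollectI exI[of _ h] exI[of _ a] exI[of _ k] exI[of _ a]) (use 1 r in auto)
      then show ?thesis using gen[of "(h,a)" "(a,k)"] 1 ak ha by auto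
    next
      case 2 then show ?thesis using anti[OF ha ak] by auto
    next
      case 3
      have "{#(a,k), (h,a)#} \<in> H2_gens n" unfolding H2_gens_def
        by (intro UnI1 CollectI exI[of _ a] exI[of _ h] exI[of _ a] exI[of _ k]) (use 3 r in auto)
      then show ?thesis using gen[of "(a,k)" "(h,a)"] 3 ak ha by auto
    next
      case 4 then show ?thesis using anti[OF ak ha] by auto
    qed
  qed
  show "face n F" unfolding face_def using sq disj anti by blast
next
  assume f: "face n F"
  then have sq: "F \<subseteq> {1..n} \<times> {1..n}" and disj: "fst ` F \<inter> snd ` F = {}"
    and anti: "\<And>x y. x \<in> F \<Longrightarrow> y \<in> F \<Longrightarrow> \<not> (fst x < fst y \<and> snd x < snd y)"
    by (auto simp: face_def)
  have fin: "finite F" using sq by (rule finite_subset) auto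
  have od: "a \<noteq> b" if "(a,b) \<in> F" for a b
    using disj that by (metis disjoint_iff fst_conv image_eqI snd_conv)
  have off: "F \<subseteq> offdiag n" using sq od by (auto simp: offdiag_def)
  have "\<not> in_monomial_ideal (H2_gens n) (mset_set F)"
  proof
    assume "in_monomial_ideal (H2_gens n) (mset_set F)"
    then obtain g where g: "g \<in> H2_gens n" "g \<subseteq># mset_set F" by (auto simp: in_monomial_ideal_def)
    from g(1) show False unfolding H2_gens_def
    proof (elim UnE CollectE exE conjE)
      fix i h j k
      assume e: "g = {#(i, k), (h, j)#}" and o: "i < h" "j < k" "i = j \<or> h = k"
      then have "(i,k) \<in> F \<and> (h,j) \<in> F" using g(2) sub_mset_pair[OF fin, of "(i,k)" "(h,j)"] by auto
      then show False using o disj by force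
    next
      fix i h j k
      assume e: "g = {#(i, j), (h, k)#}" and o: "i < h" "j < k"
      then have "(i,j) \<in> F \<and> (h,k) \<in> F" using g(2) sub_mset_pair[OF fin, of "(i,j)" "(h,k)"] by auto
      then show False using o anti by force
    qed
  qed
  then show "F \<in> Delta' n" using off by (simp add: Delta'_def)
qed


lemma face_fin: "face n F \<Longrightarrow> finite F"
  unfolding face_def by (meson finite_SigmaI finite_atLeastAtMost finite_subset)

lemma face_anti: "face n F \<Longrightarrow> x \<in> F \<Longrightarrow> y \<in> F \<Longrightarrow> \<not> (fst x < fst y \<and> snd x < snd y)"
  unfolding face_def by blast

lemma face_disj: "face n F \<Longrightarrow> x \<in> F \<Longrightarrow> y \<in> F \<Longrightarrow> fst x \<noteq> snd y"
  unfolding face_def by (metis disjoint_iff image_eqI)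

lemma face_sq: "face n F \<Longrightarrow> x \<in> F \<Longrightarrow> fst x \<in> {1..n} \<and> snd x \<in> {1..n}"
  unfolding face_def by (metis mem_Sigma_iff prod.collapse subsetD)

definition rightmost :: "(nat \<times> nat) set \<Rightarrow> nat \<times> nat \<Rightarrow> bool" where
  "rightmost F x \<longleftrightarrow> (\<forall>y\<in>F. fst y = fst x \<longrightarrow> snd y \<le> snd x)"

definition Mset :: "(nat \<times> nat) set \<Rightarrow> nat set" where
  "Mset F = {c \<in> snd ` F. \<forall>y\<in>F. snd y = c \<longrightarrow> rightmost F y}"

lemma count_bound:
  assumes f: "face n F"
  shows "card F + card (Mset F) = card (fst ` F \<union> snd ` F)"
proof -
  define g where "g x = (if rightmost F x then fst x else snd x)" for x
  have fin: "finite F" using face_fin[OF f] .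
  have inj: "inj_on g F"
  proof (rule inj_onI)
    fix x y assume x: "x \<in> F" and y: "y \<in> F" and e: "g x = g y"
    show "x = y"
    proof (cases "rightmost F x"; cases "rightmost F y")
      assume rx: "rightmost F x" and ry: "rightmost F y"
      then have "fst x = fst y" using e by (simp add: g_def)
      then show ?thesis using rx ry x y unfolding rightmost_def
        by (metis le_antisym prod_eqI)
    next
      assume rx: "rightmost F x" and ry: "\<not> rightmost F y"
      then have "fst x = snd y" using e by (simp add: g_def)
      then show ?thesis using face_disj[OF f x y] by simp
    next
      assume rx: "\<not> rightmost F x" and ry: "rightmost F y"
      then have "snd x = fst y" using e by (simp add: g_def)
      then show ?thesis using face_disj[OF f y x] by simp
    next
      assume rx: "\<not> rightmost F x" and ry: "\<not> rightmost F y"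
      then have sn: "snd x = snd y" using e by (simp add: g_def)
      have "fst x = fst y"
      proof (rule ccontr)
        assume "fst x \<noteq> fst y"
        then consider "fst x < fst y" | "fst y < fst x" by linarith
        then show False
        proof cases
          case 1
          from ry obtain y' where "y' \<in> F" "fst y' = fst y" "snd y < snd y'"
            unfolding rightmost_def by force
          then show False using face_anti[OF f x \<open>y' \<in> F\<close>] 1 sn by simp
        next
          case 2
          from rx obtain x' where "x' \<in> F" "fst x' = fst x" "snd x < snd x'"
            unfolding rightmost_def by force
          then show False using face_anti[OF f y \<open>x' \<in> F\<close>] 2 sn by simp
        qed
      qed
      then show ?thesis using sn by (simp add: prod_eqI)
    qed
  qed
  have sub: "g ` F \<subseteq> (fst ` F \<union> snd ` F) - Mset F"
  proof
    fix z assume "z \<in> g ` F"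
    then obtain x where x: "x \<in> F" "z = g x" by blast
    show "z \<in> (fst ` F \<union> snd ` F) - Mset F"
    proof (cases "rightmost F x")
      case True
      then have "z = fst x" using x by (simp add: g_def)
      moreover have "fst x \<notin> Mset F" using face_disj[OF f x(1)] unfolding Mset_def by auto
      ultimately show ?thesis using x by auto
    next
      case False
      then have "z = snd x" using x by (simp add: g_def)
      moreover have "snd x \<notin> Mset F" using False x unfolding Mset_def by auto
      ultimately show ?thesis using x by auto
    qed
  qed
  have sup: "(fst ` F \<union> snd ` F) - Mset F \<subseteq> g ` F"
  proof
    fix z assume z: "z \<in> (fst ` F \<union> snd ` F) - Mset F"
    show "z \<in> g ` F"
    proof (cases "z \<in> fst ` F")
      case True
      define Y where "Y = {y\<in>F. fst y = z}"
      have finY: "finite Y" using fin by (simp add: Y_def)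
      have neY: "Y \<noteq> {}" using True by (force simp: Y_def)
      define b where "b = Max (snd ` Y)"
      have "b \<in> snd ` Y" unfolding b_def using finY neY by simp
      then have zb: "(z,b) \<in> F" by (force simp: Y_def)
      have "rightmost F (z,b)" unfolding rightmost_def
      proof (intro ballI impI)
        fix y assume "y \<in> F" "fst y = fst (z,b)"
        then have "y \<in> Y" by (simp add: Y_def)
        then show "snd y \<le> snd (z,b)" unfolding b_def using finY by simp
      qed
      then have "g (z,b) = z" by (simp add: g_def)
      then show ?thesis using zb by force
    next
      case False
      then have zc: "z \<in> snd ` F" "z \<notin> Mset F" using z by auto
      then obtain y where y: "y \<in> F" "snd y = z" "\<not> rightmost F y" unfolding Mset_def by blast
      then have "g y = z" by (simp add: g_def)
      then show ?thesis using y by force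
    qed
  qed
  have eq: "g ` F = (fst ` F \<union> snd ` F) - Mset F" using sub sup by blast
  have finU: "finite (fst ` F \<union> snd ` F)" using fin by simp
  have MU: "Mset F \<subseteq> fst ` F \<union> snd ` F" unfolding Mset_def by auto
  have "card F = card (g ` F)" using card_image[OF inj] by simp
  also have "\<dots> = card ((fst ` F \<union> snd ` F) - Mset F)" using eq by simp
  also have "\<dots> = card (fst ` F \<union> snd ` F) - card (Mset F)"
    by (rule card_Diff_subset) (use MU finU in \<open>auto intro: finite_subset\<close>)
  finally show ?thesis using card_mono[OF finU MU] by linarith
qed



definition toprow :: "(nat \<times> nat) set \<Rightarrow> nat" where
  "toprow F = Min (fst ` F)"

definition topcol :: "(nat \<times> nat) set \<Rightarrow> nat" where
  "topcol F = Max (snd ` {y \<in> F. fst y = toprow F})"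

lemma top_facts:
  assumes f: "face n F" and ne: "F \<noteq> {}"
  shows "(toprow F, topcol F) \<in> F" "\<And>y. y \<in> F \<Longrightarrow> toprow F \<le> fst y"
    "\<And>y. y \<in> F \<Longrightarrow> fst y = toprow F \<Longrightarrow> snd y \<le> topcol F"
proof -
  have fin: "finite F" using face_fin[OF f] .
  show a: "\<And>y. y \<in> F \<Longrightarrow> toprow F \<le> fst y" unfolding toprow_def using fin by simp
  have "toprow F \<in> fst ` F" unfolding toprow_def using fin ne by simp
  then have ne2: "{y \<in> F. fst y = toprow F} \<noteq> {}" by force
  have fin2: "finite {y \<in> F. fst y = toprow F}" using fin by simp
  have "topcol F \<in> snd ` {y \<in> F. fst y = toprow F}" unfolding topcol_def
    using fin2 ne2 by (intro Max_in) auto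
  then show "(toprow F, topcol F) \<in> F" by force
  show "\<And>y. y \<in> F \<Longrightarrow> fst y = toprow F \<Longrightarrow> snd y \<le> topcol F"
    unfolding topcol_def using fin2 by (intro Max_ge) auto
qed

lemma topcol_M:
  assumes f: "face n F" and ne: "F \<noteq> {}"
  shows "topcol F \<in> Mset F"
proof -
  note t = top_facts[OF f ne]
  have "rightmost F y" if y: "y \<in> F" "snd y = topcol F" for y
    unfolding rightmost_def
  proof (intro ballI impI)
    fix z assume z: "z \<in> F" "fst z = fst y"
    show "snd z \<le> snd y"
    proof (rule ccontr)
      assume c: "\<not> snd z \<le> snd y"
      show False
      proof (cases "fst y = toprow F")
        case True
        then show False using t(3)[OF z(1)] z y c by simp
      next
        case False
        then have "toprow F < fst z" using t(2)[OF y(1)] z by simp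
        then show False using face_anti[OF f t(1) z(1)] y c by simp
      qed
    qed
  qed
  then show ?thesis unfolding Mset_def using t(1) by force
qed

lemma face_card_union:
  assumes f: "face n F" and ne: "F \<noteq> {}"
  shows "card F + 1 \<le> card (fst ` F \<union> snd ` F)"
proof -
  have "Mset F \<noteq> {}" using topcol_M[OF f ne] by auto
  moreover have "finite (Mset F)" using face_fin[OF f] unfolding Mset_def by simp
  ultimately have "card (Mset F) \<ge> 1" by (simp add: Suc_leI card_gt_0_iff)
  then show ?thesis using count_bound[OF f] by linarith
qed

lemma face_union_sub: "face n F \<Longrightarrow> fst ` F \<union> snd ` F \<subseteq> {1..n}"
  using face_sq by blast

lemma face_card: "face n F \<Longrightarrow> card F \<le> n - 1"
proof (cases "F = {}")
  case False
  assume f: "face n F"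
  have "card (fst ` F \<union> snd ` F) \<le> n"
    using card_mono[OF _ face_union_sub[OF f]] by simp
  then show ?thesis using face_card_union[OF f False] by linarith
qed simp

lemma face_full_union:
  assumes f: "face n F" and c: "card F = n - 1" and n: "n \<ge> 2"
  shows "fst ` F \<union> snd ` F = {1..n}"
proof -
  have "F \<noteq> {}" using c n by auto
  then have "card (fst ` F \<union> snd ` F) \<ge> n" using face_card_union[OF f] c n by linarith
  then show ?thesis using face_union_sub[OF f]
    by (metis card_atLeastAtMost card_seteq diff_Suc_1 finite_atLeastAtMost)
qed



lemma insert_row:
  assumes f: "face n F" and ne: "F \<noteq> {}" and t: "t \<in> {1..n}" "t \<notin> fst ` F" "t \<notin> snd ` F"
  shows "\<exists>d\<in>snd ` F. face n (insert (t,d) F)"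
proof -
  have fin: "finite F" using face_fin[OF f] .
  define A where "A = {y\<in>F. fst y < t}"
  define B where "B = {y\<in>F. t < fst y}"
  have finA: "finite A" "finite B" using fin by (auto simp: A_def B_def)
  define d where "d = (if A \<noteq> {} then Min (snd ` A) else Max (snd ` B))"
  have AB: "F = A \<union> B" using t(2) by (force simp: A_def B_def)
  have dA: "A \<noteq> {} \<Longrightarrow> d \<in> snd ` A" unfolding d_def using finA by simp
  have dB: "A = {} \<Longrightarrow> d \<in> snd ` B" unfolding d_def using finA AB ne by simp
  have dF: "d \<in> snd ` F" using dA dB by (auto simp: A_def B_def)
  have c1: "\<not> (t < fst y \<and> d < snd y)" if y: "y \<in> F" for y
  proof
    assume c: "t < fst y \<and> d < snd y"
    show False
    proof (cases "A = {}")
      case False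
      then obtain y0 where y0: "y0 \<in> A" "snd y0 = d" using dA by force
      then show False using face_anti[OF f _ y, of y0] c by (auto simp: A_def)
    next
      case True
      then have "y \<in> B" using c y by (auto simp: B_def)
      then have "snd y \<le> d" unfolding d_def using True finA by simp
      then show False using c by simp
    qed
  qed
  have c2: "\<not> (fst y < t \<and> snd y < d)" if y: "y \<in> F" for y
  proof
    assume c: "fst y < t \<and> snd y < d"
    then have "y \<in> A" using y by (simp add: A_def)
    then have "d \<le> snd y" unfolding d_def using finA by auto
    then show False using c by simp
  qed
  have "face n (insert (t,d) F)"
    unfolding face_def
  proof (intro conjI)
    show "insert (t, d) F \<subseteq> {1..n} \<times> {1..n}"
      using f t dF face_sq[OF f] unfolding face_def by auto
    show "fst ` insert (t, d) F \<inter> snd ` insert (t, d) F = {}"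
      using f t dF unfolding face_def by auto
    show "\<forall>x\<in>insert (t, d) F. \<forall>y\<in>insert (t, d) F. \<not> (fst x < fst y \<and> snd x < snd y)"
      using c1 c2 face_anti[OF f] by auto
  qed
  then show ?thesis using dF by blast
qed

lemma insert_col:
  assumes f: "face n F" and ne: "F \<noteq> {}" and t: "t \<in> {1..n}" "t \<notin> fst ` F" "t \<notin> snd ` F"
  shows "\<exists>e\<in>fst ` F. face n (insert (e,t) F)"
proof -
  have fin: "finite F" using face_fin[OF f] .
  define A where "A = {y\<in>F. t < snd y}"
  define B where "B = {y\<in>F. snd y < t}"
  have finA: "finite A" "finite B" using fin by (auto simp: A_def B_def)
  define e where "e = (if A \<noteq> {} then Max (fst ` A) else Min (fst ` B))"
  have AB: "F = A \<union> B" using t(3) by (force simp: A_def B_def)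
  have eA: "A \<noteq> {} \<Longrightarrow> e \<in> fst ` A" unfolding e_def using finA by simp
  have eB: "A = {} \<Longrightarrow> e \<in> fst ` B" unfolding e_def using finA AB ne by simp
  have eF: "e \<in> fst ` F" using eA eB by (auto simp: A_def B_def)
  have c1: "\<not> (e < fst y \<and> t < snd y)" if y: "y \<in> F" for y
  proof
    assume c: "e < fst y \<and> t < snd y"
    then have "y \<in> A" using y by (simp add: A_def)
    then have "fst y \<le> e" unfolding e_def using finA by auto
    then show False using c by simp
  qed
  have c2: "\<not> (fst y < e \<and> snd y < t)" if y: "y \<in> F" for y
  proof
    assume c: "fst y < e \<and> snd y < t"
    show False
    proof (cases "A = {}")
      case False
      then obtain y0 where y0: "y0 \<in> A" "fst y0 = e" using eA by force
      then show False using face_anti[OF f y, of y0] c by (auto simp: A_def)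
    next
      case True
      then have "y \<in> B" using c y by (auto simp: B_def)
      then have "e \<le> fst y" unfolding e_def using True finA by simp
      then show False using c by simp
    qed
  qed
  have "face n (insert (e,t) F)"
    unfolding face_def
  proof (intro conjI)
    show "insert (e, t) F \<subseteq> {1..n} \<times> {1..n}"
      using f t eF face_sq[OF f] unfolding face_def by auto
    show "fst ` insert (e, t) F \<inter> snd ` insert (e, t) F = {}"
      using f t eF unfolding face_def by auto
    show "\<forall>x\<in>insert (e, t) F. \<forall>y\<in>insert (e, t) F. \<not> (fst x < fst y \<and> snd x < snd y)"
      using c1 c2 face_anti[OF f] by auto
  qed
  then show ?thesis using eF by blast
qed



lemma extend_face:
  assumes f: "face n F" and c: "card F < n - 1" and n: "n \<ge> 2"
  shows "\<exists>y. y \<notin> F \<and> face n (insert y F)"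
proof (cases "F = {}")
  case True
  have "face n {(1,2)}" unfolding face_def using n by auto
  then show ?thesis using True by auto
next
  case ne: False
  show ?thesis
  proof (cases "\<exists>t\<in>{1..n}. t \<notin> fst ` F \<and> t \<notin> snd ` F")
    case True
    then obtain t where t: "t \<in> {1..n}" "t \<notin> fst ` F" "t \<notin> snd ` F" by blast
    from insert_row[OF f ne t] obtain d where "face n (insert (t,d) F)" by blast
    moreover have "(t,d) \<notin> F" using t by force
    ultimately show ?thesis by blast
  next
    case False
    then have U: "fst ` F \<union> snd ` F = {1..n}" using face_union_sub[OF f] by blast
    have finM: "finite (Mset F)" using face_fin[OF f] unfolding Mset_def by simp
    have cU: "card (fst ` F \<union> snd ` F) = n" using U by simp
    have "card (Mset F) \<ge> 2" using count_bound[OF f] cU c by linarith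
    have "\<not> Mset F \<subseteq> {topcol F}"
    proof
      assume "Mset F \<subseteq> {topcol F}"
      then have "card (Mset F) \<le> card {topcol F}" by (rule card_mono[rotated]) simp
      then show False using \<open>card (Mset F) \<ge> 2\<close> by simp
    qed
    then obtain c1 where c1: "c1 \<in> Mset F" "c1 \<noteq> topcol F" by blast
    note t = top_facts[OF f ne]
    have fin: "finite F" using face_fin[OF f] .
    define C where "C = fst ` {y\<in>F. snd y = c1}"
    have finC: "finite C" using fin by (simp add: C_def)
    have neC: "C \<noteq> {}" using c1 unfolding C_def Mset_def by auto
    define a1 where "a1 = Min C"
    have a1C: "a1 \<in> C" unfolding a1_def using finC neC by simp
    then have a1F: "(a1, c1) \<in> F" unfolding C_def by force
    have a1min: "a1 \<le> fst y" if "y \<in> F" "snd y = c1" for y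
    proof -
      have "fst y \<in> C" using that by (auto simp: C_def)
      then show "a1 \<le> fst y" unfolding a1_def using finC by simp
    qed
    have rm1: "rightmost F (a1,c1)" using c1 a1F unfolding Mset_def by auto
    have "a1 \<noteq> toprow F"
    proof
      assume e: "a1 = toprow F"
      have "c1 \<le> topcol F" using t(3)[OF a1F] e by simp
      moreover have "topcol F \<le> c1" using rm1 t(1) e unfolding rightmost_def by force
      ultimately show False using c1 by simp
    qed
    then have a0a1: "toprow F < a1" using t(2)[OF a1F] by simp
    define D where "D = {a \<in> fst ` F. a < a1}"
    have finD: "finite D" using fin by (simp add: D_def)
    have neD: "D \<noteq> {}" using t(1) a0a1 unfolding D_def by force
    define a2 where "a2 = Max D"
    have a2D: "a2 \<in> D" unfolding a2_def using finD neD by simp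
    have a2max: "a \<le> a2" if "a \<in> fst ` F" "a < a1" for a
    proof -
      have "a \<in> D" using that by (auto simp: D_def)
      then show "a \<le> a2" unfolding a2_def using finD by simp
    qed
    have a2r: "a2 \<in> fst ` F" "a2 < a1" using a2D by (auto simp: D_def)
    have c1c: "c1 \<in> snd ` F" using c1 unfolding Mset_def by auto
    have notin: "(a2, c1) \<notin> F" using a1min a2r by force
    have "face n (insert (a2,c1) F)"
      unfolding face_def
    proof (intro conjI)
      show "insert (a2, c1) F \<subseteq> {1..n} \<times> {1..n}"
        using f a2r c1c face_sq[OF f] unfolding face_def by auto
      have "fst ` insert (a2, c1) F = fst ` F" "snd ` insert (a2, c1) F = snd ` F"
        using a2r c1c by auto
      then show "fst ` insert (a2, c1) F \<inter> snd ` insert (a2, c1) F = {}"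
        using f unfolding face_def by simp
      have k1: "\<not> (fst y < a2 \<and> snd y < c1)" if y: "y \<in> F" for y
        using face_anti[OF f y a1F] a2r by auto
      have k2: "\<not> (a2 < fst y \<and> c1 < snd y)" if y: "y \<in> F" for y
      proof
        assume c: "a2 < fst y \<and> c1 < snd y"
        have "\<not> fst y < a1" using a2max[of "fst y"] y c by force
        then consider "fst y = a1" | "a1 < fst y" by linarith
        then show False
        proof cases
          case 1 then show False using rm1 y c unfolding rightmost_def by force
        next
          case 2 then show False using face_anti[OF f a1F y] c by simp
        qed
      qed
      show "\<forall>x\<in>insert (a2, c1) F. \<forall>y\<in>insert (a2, c1) F. \<not> (fst x < fst y \<and> snd x < snd y)"
        using k1 k2 face_anti[OF f] by auto
    qed
    then show ?thesis using notin by blast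
  qed
qed

lemma facets_iff: "F \<in> facets D \<longleftrightarrow> F \<in> D \<and> (\<forall>G\<in>D. F \<subseteq> G \<longrightarrow> G = F)"
  unfolding facets_def by (rule mem_Collect_eq)

lemma facets_char:
  assumes n: "n \<ge> 2"
  shows "F \<in> facets (Delta' n) \<longleftrightarrow> face n F \<and> card F = n - 1"
proof
  assume F: "F \<in> facets (Delta' n)"
  then have F1: "F \<in> Delta' n" "\<forall>G\<in>Delta' n. F \<subseteq> G \<longrightarrow> G = F"
    unfolding facets_iff by auto
  then have f: "face n F" using Delta'_face by simp
  have mx: "\<And>G. G \<in> Delta' n \<Longrightarrow> F \<subseteq> G \<Longrightarrow> G = F" using F1(2) by blast
  have "\<not> card F < n - 1"
  proof
    assume "card F < n - 1"
    from extend_face[OF f this n] obtain y where y: "y \<notin> F" "face n (insert y F)" by blast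
    have "insert y F = F" by (rule mx) (use y(2) Delta'_face in auto)
    then show False using y(1) by auto
  qed
  then show "face n F \<and> card F = n - 1" using f face_card[OF f] by simp
next
  assume "face n F \<and> card F = n - 1"
  then have f: "face n F" and c: "card F = n - 1" by auto
  show "F \<in> facets (Delta' n)" unfolding facets_iff
  proof (intro conjI ballI impI)
    show "F \<in> Delta' n" using f Delta'_face by simp
    fix G assume g: "G \<in> Delta' n" and s: "F \<subseteq> G"
    then have fg: "face n G" using Delta'_face by simp
    have "card G \<le> card F" using face_card[OF fg] c by simp
    from card_seteq[OF face_fin[OF fg] s this] show "G = F" by simp
  qed
qed


definition U :: "bool list \<Rightarrow> nat \<Rightarrow> nat" where
  "U s k = length (filter id (take k s))"

definition H :: "bool list \<Rightarrow> nat \<Rightarrow> nat" where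
  "H s k = length (filter Not (take k s))"

lemma U0[simp]: "U s 0 = 0" and H0[simp]: "H s 0 = 0"
  by (simp_all add: U_def H_def)

lemma UH_sum: "k \<le> length s \<Longrightarrow> U s k + H s k = k"
  unfolding U_def H_def
  using sum_length_filter_compl[of id "take k s"]
  by (simp add: comp_def)

lemma U_Suc: "k < length s \<Longrightarrow> U s (Suc k) = U s k + (if s ! k then 1 else 0)"
  unfolding U_def by (simp add: take_Suc_conv_app_nth)

lemma H_Suc: "k < length s \<Longrightarrow> H s (Suc k) = H s k + (if s ! k then 0 else 1)"
  unfolding H_def by (simp add: take_Suc_conv_app_nth)

lemma U_mono: "k \<le> k' \<Longrightarrow> U s k \<le> U s k'"
proof -
  assume "k \<le> k'"
  then obtain d where "k' = k + d" by (metis le_add_diff_inverse)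
  then show ?thesis unfolding U_def by (simp add: take_add)
qed

lemma H_mono: "k \<le> k' \<Longrightarrow> H s k \<le> H s k'"
proof -
  assume "k \<le> k'"
  then obtain d where "k' = k + d" by (metis le_add_diff_inverse)
  then show ?thesis unfolding H_def by (simp add: take_add)
qed

lemma U_len: "U s (length s) = length (filter id s)"
  unfolding U_def by simp

lemma walk_len[simp]: "length (walk ab s) = Suc (length s)"
  by (induction ab s rule: walk.induct) auto

lemma walk_nth: "k \<le> length s \<Longrightarrow> walk (a,b) s ! k = (a - U s k, b + H s k)"
proof (induction s arbitrary: a b k)
  case Nil then show ?case by simp
next
  case (Cons v s)
  show ?case
  proof (cases k)
    case 0 then show ?thesis by simp
  next
    case (Suc k')
    then have k': "k' \<le> length s" using Cons.prems by simp
    have u: "U (v # s) k = (if v then 1 else 0) + U s k'" using Suc by (simp add: U_def)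
    have h: "H (v # s) k = (if v then 0 else 1) + H s k'" using Suc by (simp add: H_def)
    show ?thesis using Cons.IH[OF k'] Suc u h by (cases v) auto
  qed
qed

lemma set_walk: "set (walk (a,b) s) = {(a - U s k, b + H s k) | k. k \<le> length s}"
proof (intro set_eqI iffI)
  fix z assume "z \<in> set (walk (a,b) s)"
  then obtain k where k: "k < length (walk (a,b) s)" "z = walk (a,b) s ! k" by (metis in_set_conv_nth)
  then have "k \<le> length s" by simp
  then show "z \<in> {(a - U s k, b + H s k) | k. k \<le> length s}" using walk_nth[of k s a b] k by blast
next
  fix z assume "z \<in> {(a - U s k, b + H s k) | k. k \<le> length s}"
  then obtain k where k: "k \<le> length s" "z = (a - U s k, b + H s k)" by blast
  then have "z = walk (a,b) s ! k" using walk_nth by simp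
  moreover have "k < length (walk (a,b) s)" using k by simp
  ultimately show "z \<in> set (walk (a,b) s)" by (simp add: nth_mem)
qed

lemma U_le_total: "k \<le> length s \<Longrightarrow> U s k \<le> length (filter id s)"
  using U_mono[of k "length s" s] U_len by simp

lemma H_le_total: "k \<le> length s \<Longrightarrow> H s k \<le> length s - length (filter id s)"
  using H_mono[of k "length s" s] UH_sum[of "length s" s] U_len[of s] by simp

lemma UH_inj: "k \<le> length s \<Longrightarrow> k' \<le> length s \<Longrightarrow> U s k = U s k' \<Longrightarrow> H s k = H s k' \<Longrightarrow> k = k'"
proof -
  assume a: "k \<le> length s" "k' \<le> length s" "U s k = U s k'" "H s k = H s k'"
  have "k = U s k + H s k" using UH_sum[OF a(1)] by simp
  also have "\<dots> = U s k' + H s k'" using a by simp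
  also have "\<dots> = k'" using UH_sum[OF a(2)] by simp
  finally show ?thesis .
qed



lemma index_lemma:
  "m = a + (q - 1 - b) \<Longrightarrow> b < q \<Longrightarrow> I \<subseteq> {..a} \<times> {b..<q} \<Longrightarrow>
   (\<forall>x\<in>I. \<forall>y\<in>I. \<not> (fst x < fst y \<and> snd x < snd y)) \<Longrightarrow> card I = Suc m \<Longrightarrow>
   \<exists>s. length s = m \<and> length (filter id s) = a \<and> set (walk (a,b) s) = I"
proof (induction m arbitrary: a b I)
  case 0
  from 0(5) have "card I = 1" by simp
  then obtain z where I: "I = {z}" by (rule card_1_singletonE)
  have a0: "a = 0" "b = q - 1" using 0(1,2) by auto
  then have "z = (a,b)" using 0(3) I by auto
  then show ?case using I a0 by (intro exI[of _ "[]"]) auto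
next
  case (Suc m)
  have fin: "finite I"
  proof (rule ccontr)
    assume "infinite I" then have "card I = 0" by simp
    then show False using Suc.prems(5) by simp
  qed
  have anti: "\<not> (fst x < fst y \<and> snd x < snd y)" if "x \<in> I" "y \<in> I" for x y
    using Suc.prems(4) that by blast
  have box: "fst x \<le> a \<and> b \<le> snd x \<and> snd x < q" if "x \<in> I" for x
    using Suc.prems(3) that by auto
  define phi where "phi x = (a - fst x) + (snd x - b)" for x :: "nat \<times> nat"
  have inj: "inj_on phi I"
  proof (rule inj_onI)
    fix x y assume x: "x \<in> I" and y: "y \<in> I" and e: "phi x = phi y"
    have bx: "fst x \<le> a" "b \<le> snd x" "fst y \<le> a" "b \<le> snd y" using box[OF x] box[OF y] by auto
    have "fst x = fst y"
    proof (rule ccontr)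
      assume "fst x \<noteq> fst y"
      then consider "fst x < fst y" | "fst y < fst x" by linarith
      then show False
      proof cases
        case 1 then have "snd y \<le> snd x" using anti[OF x y] by linarith
        then show False using e 1 bx unfolding phi_def by linarith
      next
        case 2 then have "snd x \<le> snd y" using anti[OF y x] by linarith
        then show False using e 2 bx unfolding phi_def by linarith
      qed
    qed
    moreover then have "snd x = snd y" using e bx unfolding phi_def by linarith
    ultimately show "x = y" by (simp add: prod_eq_iff)
  qed
  have sub: "phi ` I \<subseteq> {..Suc m}"
  proof
    fix z assume "z \<in> phi ` I"
    then obtain x where x: "x \<in> I" "z = phi x" by blast
    have "fst x \<le> a \<and> b \<le> snd x \<and> snd x < q" using box[OF x(1)] .
    then have "phi x \<le> Suc m" using Suc.prems(1) unfolding phi_def by arith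
    then show "z \<in> {..Suc m}" using x(2) by simp
  qed
  have "card (phi ` I) = card {..Suc m}" using card_image[OF inj] Suc.prems(5) by simp
  then have "phi ` I = {..Suc m}" using card_subset_eq[OF finite_atMost sub] by simp
  then have "0 \<in> phi ` I" by auto
  then obtain x0 where x0': "0 = phi x0" "x0 \<in> I" by (rule imageE)
  then have x0: "x0 \<in> I" "phi x0 = 0" by auto
  have ab: "(a,b) \<in> I"
  proof -
    have "fst x0 \<le> a" "b \<le> snd x0" using box[OF x0(1)] by auto
    then have "x0 = (a,b)" using x0(2) unfolding phi_def by (simp add: prod_eq_iff)
    then show ?thesis using x0 by simp
  qed
  define I' where "I' = I - {(a,b)}"
  have cI': "card I' = Suc m" using Suc.prems(5) ab fin by (simp add: I'_def)
  have neI': "I' \<noteq> {}" using cI' by auto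
  have I'I: "I' \<subseteq> I" by (auto simp: I'_def)
  have anti': "\<forall>x\<in>I'. \<forall>y\<in>I'. \<not> (fst x < fst y \<and> snd x < snd y)"
    using anti I'I by blast
  have split: "(\<forall>x\<in>I'. fst x < a) \<or> (\<forall>x\<in>I'. b < snd x)"
  proof (rule ccontr)
    assume "\<not> ?thesis"
    then obtain x y where x: "x \<in> I'" "\<not> fst x < a" and y: "y \<in> I'" "\<not> b < snd y" by blast
    have xI: "x \<in> I" "x \<noteq> (a,b)" using x(1) by (auto simp: I'_def)
    have yI: "y \<in> I" "y \<noteq> (a,b)" using y(1) by (auto simp: I'_def)
    have "fst x = a" using box[OF xI(1)] x(2) by linarith
    then have x2: "b < snd x" using box[OF xI(1)] xI(2) by (cases x) auto
    have "snd y = b" using box[OF yI(1)] y(2) by linarith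
    then have y2: "fst y < a" using box[OF yI(1)] yI(2) by (cases y) auto
    show False using anti[OF yI(1) xI(1)] \<open>fst x = a\<close> \<open>snd y = b\<close> x2 y2 by linarith
  qed
  then show ?case
  proof
    assume A: "\<forall>x\<in>I'. fst x < a"
    obtain x1 where "x1 \<in> I'" using neI' by blast
    then have a1: "a \<ge> 1" using A by fastforce
    have sub': "I' \<subseteq> {..a-1} \<times> {b..<q}"
    proof
      fix x assume x: "x \<in> I'"
      then have "fst x < a" using A by blast
      moreover have "fst x \<le> a \<and> b \<le> snd x \<and> snd x < q" using box x I'I by blast
      ultimately show "x \<in> {..a-1} \<times> {b..<q}" by (cases x) auto
    qed
    have "m = (a - 1) + (q - 1 - b)" using Suc.prems(1) a1 by simp
    from Suc.IH[OF this Suc.prems(2) sub' anti' cI'] obtain s where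
      s: "length s = m" "length (filter id s) = a - 1" "set (walk (a-1, b) s) = I'" by blast
    have "set (walk (a,b) (True # s)) = insert (a,b) I'" using s by simp
    also have "\<dots> = I" using ab by (auto simp: I'_def)
    finally show ?thesis using s a1 by (intro exI[of _ "True # s"]) (simp add: id_def)
  next
    assume B: "\<forall>x\<in>I'. b < snd x"
    obtain x1 where x1: "x1 \<in> I'" using neI' by blast
    then have "b < snd x1" "snd x1 < q" using B box I'I by blast+
    then have b1: "b + 1 < q" by linarith
    have sub': "I' \<subseteq> {..a} \<times> {b+1..<q}"
    proof
      fix x assume x: "x \<in> I'"
      then have "b < snd x" using B by blast
      moreover have "fst x \<le> a \<and> b \<le> snd x \<and> snd x < q" using box x I'I by blast
      ultimately show "x \<in> {..a} \<times> {b+1..<q}" by (cases x) auto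
    qed
    have "m = a + (q - 1 - (b+1))" using Suc.prems(1) b1 by simp
    from Suc.IH[OF this b1 sub' anti' cI'] obtain s where
      s: "length s = m" "length (filter id s) = a" "set (walk (a, b+1) s) = I'" by blast
    have "set (walk (a,b) (False # s)) = insert (a,b) I'" using s by simp
    also have "\<dots> = I" using ab by (auto simp: I'_def)
    finally show ?thesis using s by (intro exI[of _ "False # s"]) (simp add: id_def)
  qed
qed


lemma walk_unique:
  assumes l: "length s = length s'" and c: "length (filter id s) \<le> a" "length (filter id s') \<le> a"
    and e: "set (walk (a,b) s) = set (walk (a,b) s')"
  shows "s = s'"
proof -
  define phi where "phi z = (a - fst z) + (snd z - b)" for z :: "nat \<times> nat"
  have phik: "phi (walk (a,b) t ! k) = k" if "k \<le> length t" "length (filter id t) \<le> a" for t k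
  proof -
    have "U t k \<le> a" using U_le_total[OF that(1)] that(2) by simp
    then show ?thesis using walk_nth[OF that(1), of a b] UH_sum[OF that(1)] unfolding phi_def by simp
  qed
  have same: "walk (a,b) s ! k = walk (a,b) s' ! k" if k: "k \<le> length s" for k
  proof -
    have "walk (a,b) s' ! k \<in> set (walk (a,b) s)" using e k l by (simp add: nth_mem less_Suc_eq_le)
    then obtain k' where k': "k' < length (walk (a,b) s)" "walk (a,b) s ! k' = walk (a,b) s' ! k"
      by (metis in_set_conv_nth)
    have "k' = k" using phik[of k' s] phik[of k s'] k' k l c by (simp add: less_Suc_eq_le)
    then show ?thesis using k' by simp
  qed
  have Ueq: "U s k = U s' k" if k: "k \<le> length s" for k
  proof -
    have "U s k \<le> a" "U s' k \<le> a" using U_le_total[of k s] U_le_total[of k s'] k l c by auto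
    moreover have "a - U s k = a - U s' k" using same[OF k] walk_nth[OF k, of a b] walk_nth[of k s' a b] k l by simp
    ultimately show ?thesis by linarith
  qed
  show ?thesis
  proof (rule nth_equalityI[OF l])
    fix k assume k: "k < length s"
    have "U s (Suc k) = U s' (Suc k)" "U s k = U s' k" using Ueq k by auto
    then show "s ! k = s' ! k" using U_Suc[OF k] U_Suc[of k s'] k l by (auto split: if_splits)
  qed
qed



lemma sl_len: "finite A \<Longrightarrow> length (sorted_list_of_set A) = card A"
  by simp

lemma sl_less: "finite A \<Longrightarrow> i < j \<Longrightarrow> j < card A \<Longrightarrow> sorted_list_of_set A ! i < sorted_list_of_set A ! j"
  using sorted_wrt_nth_less[OF sorted_list_of_set.strict_sorted_key_list_of_set[of A]] by simp

lemma sl_less_iff: "finite A \<Longrightarrow> i < card A \<Longrightarrow> j < card A \<Longrightarrow>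
    sorted_list_of_set A ! i < sorted_list_of_set A ! j \<longleftrightarrow> i < j"
  by (metis less_asym linorder_neqE_nat sl_less)

lemma sl_le_iff: "finite A \<Longrightarrow> i < card A \<Longrightarrow> j < card A \<Longrightarrow>
    sorted_list_of_set A ! i \<le> sorted_list_of_set A ! j \<longleftrightarrow> i \<le> j"
  by (meson not_le sl_less_iff)

lemma sl_eq_iff: "finite A \<Longrightarrow> i < card A \<Longrightarrow> j < card A \<Longrightarrow>
    sorted_list_of_set A ! i = sorted_list_of_set A ! j \<longleftrightarrow> i = j"
proof
  assume f: "finite A" and ij: "i < card A" "j < card A" and e: "sorted_list_of_set A ! i = sorted_list_of_set A ! j"
  show "i = j"
  proof (rule ccontr)
    assume "i \<noteq> j"
    then consider "i < j" | "j < i" by linarith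
    then show False
    proof cases
      case 1 then show False using sl_less[OF f 1 ij(2)] e by simp
    next
      case 2 then show False using sl_less[OF f 2 ij(1)] e by simp
    qed
  qed
qed simp

lemma sl_in: "finite A \<Longrightarrow> i < card A \<Longrightarrow> sorted_list_of_set A ! i \<in> A"
  by (metis nth_mem sorted_list_of_set.length_sorted_key_list_of_set
      sorted_list_of_set.set_sorted_key_list_of_set)

lemma sl_surj: "finite A \<Longrightarrow> x \<in> A \<Longrightarrow> \<exists>i<card A. sorted_list_of_set A ! i = x"
  by (metis in_set_conv_nth sorted_list_of_set.length_sorted_key_list_of_set
      sorted_list_of_set.set_sorted_key_list_of_set)

lemma sl_last: "finite A \<Longrightarrow> A \<noteq> {} \<Longrightarrow> sorted_list_of_set A ! (card A - 1) = Max A"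
proof -
  assume f: "finite A" and ne: "A \<noteq> {}"
  have c: "card A > 0" using f ne by (simp add: card_gt_0_iff)
  have m: "sorted_list_of_set A ! (card A - 1) \<in> A" using sl_in[OF f] c by simp
  have "x \<le> sorted_list_of_set A ! (card A - 1)" if x: "x \<in> A" for x
  proof -
    obtain i where i: "i < card A" "sorted_list_of_set A ! i = x" using sl_surj[OF f x] by blast
    then show ?thesis using sl_le_iff[OF f, of i "card A - 1"] c by simp
  qed
  then show ?thesis using m f by (intro Max_eqI[symmetric]) auto
qed

definition ppt :: "nat \<Rightarrow> nat set \<Rightarrow> bool list \<Rightarrow> nat \<Rightarrow> nat \<times> nat" where
  "ppt n R s k = (grid_rows R ! (card R - 1 - U s k), grid_cols n R ! H s k)"

lemma path_walk_nth: "k \<le> length s \<Longrightarrow> path_walk R s ! k = (card R - 1 - U s k, H s k)"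
  unfolding path_walk_def using walk_nth[of k s "card R - 1" 0] by simp

lemma ppt_eq: "k \<le> length s \<Longrightarrow> path_pt n R (path_walk R s ! k) = ppt n R s k"
  unfolding ppt_def path_pt_def using path_walk_nth by simp

lemma path_set_ppt: "path_set n R s = ppt n R s ` {..length s}"
proof -
  have "path_set n R s = path_pt n R ` set (path_walk R s)" by (simp add: path_set_def)
  also have "set (path_walk R s) = (\<lambda>k. path_walk R s ! k) ` {..length s}"
    unfolding path_walk_def by (auto simp: set_conv_nth less_Suc_eq_le image_iff)
  finally show ?thesis using ppt_eq by (simp add: image_image path_walk_def)
qed

definition pdata :: "nat \<Rightarrow> nat set \<Rightarrow> bool list \<Rightarrow> bool" where
  "pdata n R s \<longleftrightarrow> R \<noteq> {} \<and> R \<subseteq> {1..n} \<and> R \<noteq> {1..n}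
     \<and> is_path_steps (card R) (card ({1..n} - R)) s"

lemma pdata_basic:
  assumes "pdata n R s"
  shows "finite R" "card R \<ge> 1" "card ({1..n} - R) \<ge> 1" "card R + card ({1..n} - R) = n"
    "length s = (card R - 1) + (card ({1..n} - R) - 1)" "length (filter id s) = card R - 1"
    "{1..n} - R \<noteq> {}"
proof -
  have R: "R \<noteq> {}" "R \<subseteq> {1..n}" "R \<noteq> {1..n}" using assms by (auto simp: pdata_def)
  show f: "finite R" using R(2) finite_subset by blast
  show "card R \<ge> 1" using f R(1) by (simp add: Suc_leI card_gt_0_iff)
  show ne: "{1..n} - R \<noteq> {}" using R by blast
  show "card ({1..n} - R) \<ge> 1" using ne by (simp add: Suc_leI card_gt_0_iff)
  show "card R + card ({1..n} - R) = n"
    using card_Diff_subset[OF f R(2)] card_mono[OF _ R(2)] by simp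
  show "length s = (card R - 1) + (card ({1..n} - R) - 1)" "length (filter id s) = card R - 1"
    using assms by (auto simp: pdata_def is_path_steps_def)
qed

lemma ppt_bounds:
  assumes d: "pdata n R s" and k: "k \<le> length s"
  shows "card R - 1 - U s k < card R" "H s k < card ({1..n} - R)"
    "fst (ppt n R s k) \<in> R" "snd (ppt n R s k) \<in> {1..n} - R"
proof -
  note b = pdata_basic[OF d]
  show i: "card R - 1 - U s k < card R" using b by linarith
  have "H s k \<le> length s - length (filter id s)" using H_le_total[OF k] .
  then show j: "H s k < card ({1..n} - R)" using b by linarith
  show "fst (ppt n R s k) \<in> R" unfolding ppt_def grid_rows_def using sl_in[OF b(1) i] by simp
  show "snd (ppt n R s k) \<in> {1..n} - R" unfolding ppt_def grid_cols_def using sl_in[OF _ j] by simp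
qed

lemma ppt_inj:
  assumes d: "pdata n R s" and k: "k \<le> length s" "k' \<le> length s"
    and e: "ppt n R s k = ppt n R s k'"
  shows "k = k'"
proof -
  note b = pdata_basic[OF d]
  note bk = ppt_bounds[OF d k(1)] and bk' = ppt_bounds[OF d k(2)]
  have "card R - 1 - U s k = card R - 1 - U s k'"
    using e bk(1) bk'(1) sl_eq_iff[OF b(1)] unfolding ppt_def grid_rows_def by simp
  moreover have "U s k \<le> card R - 1" using U_le_total[OF k(1)] b(6) by simp
  moreover have "U s k' \<le> card R - 1" using U_le_total[OF k(2)] b(6) by simp
  ultimately have u: "U s k = U s k'" by linarith
  have "H s k = H s k'"
    using e bk(2) bk'(2) sl_eq_iff[of "{1..n} - R"] unfolding ppt_def grid_cols_def by simp
  then show ?thesis using UH_inj[OF k u] by simp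
qed

lemma ppt_order:
  assumes d: "pdata n R s" and k: "k \<le> k'" "k' \<le> length s"
  shows "fst (ppt n R s k') \<le> fst (ppt n R s k)" "snd (ppt n R s k) \<le> snd (ppt n R s k')"
proof -
  note b = pdata_basic[OF d]
  have kk: "k \<le> length s" using k by simp
  note bk = ppt_bounds[OF d kk] and bk' = ppt_bounds[OF d k(2)]
  have "U s k \<le> U s k'" using U_mono[OF k(1)] .
  then have "card R - 1 - U s k' \<le> card R - 1 - U s k" by simp
  then show "fst (ppt n R s k') \<le> fst (ppt n R s k)"
    using sl_le_iff[OF b(1) bk'(1) bk(1)] unfolding ppt_def grid_rows_def by simp
  have "H s k \<le> H s k'" using H_mono[OF k(1)] .
  then show "snd (ppt n R s k) \<le> snd (ppt n R s k')"
    using sl_le_iff[OF _ bk(2) bk'(2)] unfolding ppt_def grid_cols_def by simp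
qed

lemma path_set_sub:
  assumes d: "pdata n R s"
  shows "path_set n R s \<subseteq> R \<times> ({1..n} - R)"
proof
  fix x assume "x \<in> path_set n R s"
  then obtain k where k: "k \<le> length s" "x = ppt n R s k" unfolding path_set_ppt by auto
  have "fst x \<in> R" "snd x \<in> {1..n} - R" using ppt_bounds(3,4)[OF d k(1)] k(2) by simp_all
  then show "x \<in> R \<times> ({1..n} - R)" by (simp add: mem_Times_iff)
qed

lemma path_face:
  assumes d: "pdata n R s"
  shows "face n (path_set n R s)" "card (path_set n R s) = n - 1"
proof -
  note b = pdata_basic[OF d]
  have R: "R \<subseteq> {1..n}" using d by (simp add: pdata_def)
  let ?F = "path_set n R s"
  have sq: "?F \<subseteq> R \<times> ({1..n} - R)" using path_set_sub[OF d] .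
  show "face n ?F" unfolding face_def
  proof (intro conjI)
    show "?F \<subseteq> {1..n} \<times> {1..n}" using sq R by blast
    show "fst ` ?F \<inter> snd ` ?F = {}"
    proof -
      have "fst ` ?F \<subseteq> R" "snd ` ?F \<subseteq> {1..n} - R" using sq by auto
      then show ?thesis by blast
    qed
    show "\<forall>x\<in>?F. \<forall>y\<in>?F. \<not> (fst x < fst y \<and> snd x < snd y)"
    proof (intro ballI)
      fix x y assume "x \<in> ?F" "y \<in> ?F"
      then obtain k k' where kk: "k \<le> length s" "k' \<le> length s" "x = ppt n R s k" "y = ppt n R s k'"
        unfolding path_set_ppt by auto
      show "\<not> (fst x < fst y \<and> snd x < snd y)"
      proof (cases "k \<le> k'")
        case True then show ?thesis using ppt_order[OF d True kk(2)] kk by simp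
      next
        case False then show ?thesis using ppt_order[OF d _ kk(1), of k'] kk by simp
      qed
    qed
  qed
  have "inj_on (ppt n R s) {..length s}" using ppt_inj[OF d] by (auto simp: inj_on_def)
  then have "card ?F = Suc (length s)" unfolding path_set_ppt by (simp add: card_image)
  then show "card ?F = n - 1" using b by linarith
qed

lemma path_rows_cols:
  assumes d: "pdata n R s" and n: "n \<ge> 2"
  shows "fst ` path_set n R s = R" "snd ` path_set n R s = {1..n} - R"
proof -
  let ?F = "path_set n R s"
  have sq: "?F \<subseteq> R \<times> ({1..n} - R)" using path_set_sub[OF d] .
  have a: "fst ` ?F \<subseteq> R" "snd ` ?F \<subseteq> {1..n} - R" using sq by auto
  have U: "fst ` ?F \<union> snd ` ?F = {1..n}" using face_full_union[OF path_face[OF d] n] .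
  have R: "R \<subseteq> {1..n}" using d by (simp add: pdata_def)
  show "fst ` ?F = R"
  proof (rule equalityI[OF a(1)], rule subsetI)
    fix x assume x: "x \<in> R"
    then have "x \<in> fst ` ?F \<union> snd ` ?F" using U R by blast
    moreover have "x \<notin> snd ` ?F" using a(2) x by blast
    ultimately show "x \<in> fst ` ?F" by blast
  qed
  show "snd ` ?F = {1..n} - R"
  proof (rule equalityI[OF a(2)], rule subsetI)
    fix x assume x: "x \<in> {1..n} - R"
    then have "x \<in> fst ` ?F \<union> snd ` ?F" using U by blast
    moreover have "x \<notin> fst ` ?F" using a(1) x by blast
    ultimately show "x \<in> snd ` ?F" by blast
  qed
qed

lemma facet_has_path:
  assumes F: "F \<in> facets (Delta' n)" and n: "n \<ge> 2"
  shows "\<exists>s. pdata n (fst ` F) s \<and> path_set n (fst ` F) s = F"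
proof -
  have f: "face n F" and c: "card F = n - 1" using facets_char[OF n] F by auto
  define R where "R = fst ` F"
  define C where "C = {1..n} - R"
  have U: "fst ` F \<union> snd ` F = {1..n}" using face_full_union[OF f c n] .
  have disj: "fst ` F \<inter> snd ` F = {}" using f by (simp add: face_def)
  have CF: "snd ` F = C" using U disj by (auto simp: C_def R_def)
  have Rsub: "R \<subseteq> {1..n}" using U by (auto simp: R_def)
  have Fne: "F \<noteq> {}" using c n by auto
  have Rne: "R \<noteq> {}" using Fne by (simp add: R_def)
  have Cne: "C \<noteq> {}" using Fne CF by auto
  have RnU: "R \<noteq> {1..n}" using Cne by (auto simp: C_def)
  have finR: "finite R" using Rsub finite_subset by blast
  have finC: "finite C" by (simp add: C_def)
  define p where "p = card R"
  define q where "q = card C"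
  have p1: "p \<ge> 1" using finR Rne by (simp add: p_def Suc_leI card_gt_0_iff)
  have q1: "q \<ge> 1" using finC Cne by (simp add: q_def Suc_leI card_gt_0_iff)
  have pq: "p + q = n" unfolding p_def q_def C_def
    using card_Diff_subset[OF finR Rsub] card_mono[OF _ Rsub] by simp
  define g where "g ij = (sorted_list_of_set R ! fst ij, sorted_list_of_set C ! snd ij)" for ij :: "nat \<times> nat"
  define I where "I = {ij. fst ij < p \<and> snd ij < q \<and> g ij \<in> F}"
  have ginj: "inj_on g ({..<p} \<times> {..<q})"
    unfolding inj_on_def g_def p_def q_def using sl_eq_iff[OF finR] sl_eq_iff[OF finC]
    by (auto simp: prod_eq_iff)
  have gI: "g ` I = F"
  proof (intro set_eqI iffI)
    fix x assume "x \<in> g ` I" then show "x \<in> F" by (auto simp: I_def)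
  next
    fix x assume x: "x \<in> F"
    have "fst x \<in> R" using x by (simp add: R_def)
    then obtain i where i: "i < p" "sorted_list_of_set R ! i = fst x" using sl_surj[OF finR] p_def by blast
    have "snd x \<in> C" using x CF by blast
    then obtain j where j: "j < q" "sorted_list_of_set C ! j = snd x" using sl_surj[OF finC] q_def by blast
    have "g (i,j) = x" using i j by (simp add: g_def)
    then show "x \<in> g ` I" using i j x unfolding I_def by force
  qed
  have Isub: "I \<subseteq> {..<p} \<times> {..<q}" by (auto simp: I_def)
  have cI: "card I = n - 1"
    using card_image[OF inj_on_subset[OF ginj Isub]] gI c by simp
  have antiI: "\<forall>x\<in>I. \<forall>y\<in>I. \<not> (fst x < fst y \<and> snd x < snd y)"
  proof (intro ballI notI)
    fix x y assume x: "x \<in> I" and y: "y \<in> I" and l: "fst x < fst y \<and> snd x < snd y"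
    have "fst (g x) < fst (g y)" using l x y sl_less[OF finR] unfolding g_def I_def p_def by simp
    moreover have "snd (g x) < snd (g y)" using l x y sl_less[OF finC] unfolding g_def I_def q_def by simp
    ultimately show False using face_anti[OF f, of "g x" "g y"] x y by (auto simp: I_def)
  qed
  have Ibox: "I \<subseteq> {..p-1} \<times> {0..<q}" using Isub by auto
  have "\<exists>s. length s = (p - 1) + (q - 1 - 0) \<and> length (filter id s) = p - 1 \<and> set (walk (p-1, 0) s) = I"
    by (rule index_lemma[OF refl _ Ibox antiI]) (use q1 cI pq p1 in auto)
  then obtain s where s: "length s = (p - 1) + (q - 1)" "length (filter id s) = p - 1"
    "set (walk (p-1, 0) s) = I" by auto
  have pd: "pdata n R s" unfolding pdata_def is_path_steps_def
    using Rne Rsub RnU s by (simp add: p_def q_def C_def)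
  have "path_set n R s = path_pt n R ` I"
    using s(3) by (simp add: path_set_def path_walk_def p_def)
  also have "\<dots> = g ` I"
    by (rule image_cong) (auto simp: path_pt_def g_def grid_rows_def grid_cols_def C_def)
  finally show ?thesis using pd gI by (auto simp: R_def)
qed

lemma path_unique:
  assumes d: "pdata n R s" and d': "pdata n R s'" and e: "path_set n R s = path_set n R s'"
  shows "s = s'"
proof -
  note b = pdata_basic[OF d] and b' = pdata_basic[OF d']
  have "set (walk (card R - 1, 0) s) = set (walk (card R - 1, 0) s')"
  proof -
    have gi: "inj_on (path_pt n R) ({..<card R} \<times> {..<card ({1..n} - R)})"
      unfolding inj_on_def path_pt_def grid_rows_def grid_cols_def
      using sl_eq_iff[OF b(1)] sl_eq_iff[of "{1..n} - R"] by (auto simp: prod_eq_iff)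
    have sub: "set (walk (card R - 1, 0) t) \<subseteq> {..<card R} \<times> {..<card ({1..n} - R)}"
      if "pdata n R t" for t
      using ppt_bounds[OF that] by (auto simp: set_walk)
    have "path_pt n R ` set (walk (card R - 1, 0) s) = path_pt n R ` set (walk (card R - 1, 0) s')"
      using e by (simp add: path_set_def path_walk_def)
    then show ?thesis using inj_on_image_eq_iff[OF gi sub[OF d] sub[OF d']] by simp
  qed
  then show ?thesis using walk_unique[of s s' "card R - 1" 0] b b' by simp
qed

lemma facets_pdata:
  assumes n: "n \<ge> 2"
  shows "F \<in> facets (Delta' n) \<longleftrightarrow> (\<exists>R s. pdata n R s \<and> F = path_set n R s)"
proof
  assume "F \<in> facets (Delta' n)"
  then show "\<exists>R s. pdata n R s \<and> F = path_set n R s" using facet_has_path[OF _ n] by metis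
next
  assume "\<exists>R s. pdata n R s \<and> F = path_set n R s"
  then obtain R s where "pdata n R s" "F = path_set n R s" by blast
  then show "F \<in> facets (Delta' n)" using path_face facets_char[OF n] by simp
qed

lemma block_eq:
  assumes d: "pdata n R s" and n: "n \<ge> 2"
  shows "block n (path_set n R s) = R"
proof -
  let ?F = "path_set n R s"
  have F: "?F \<in> facets (Delta' n)" using facets_pdata[OF n] d by blast
  then have FD': "?F \<in> Delta' n" and mx: "\<forall>G\<in>Delta' n. ?F \<subseteq> G \<longrightarrow> G = ?F"
    unfolding facets_iff by auto
  note rc = path_rows_cols[OF d n]
  have sq: "?F \<subseteq> R \<times> ({1..n} - R)" using path_set_sub[OF d] .
  have R: "R \<noteq> {}" "R \<subseteq> {1..n}" "R \<noteq> {1..n}" using d by (auto simp: pdata_def)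
  have P: "R' \<noteq> {} \<and> R' \<subset> {1..n} \<and> ?F \<in> facets (DeltaR n R') \<longleftrightarrow> R' = R" for R'
  proof
    assume a: "R' \<noteq> {} \<and> R' \<subset> {1..n} \<and> ?F \<in> facets (DeltaR n R')"
    then have "?F \<in> DeltaR n R'" unfolding facets_iff by blast
    then have sub: "?F \<subseteq> R' \<times> ({1..n} - R')" unfolding DeltaR_def by blast
    have "fst ` ?F \<subseteq> R'" using sub by auto
    then have RR: "R \<subseteq> R'" using rc(1) by simp
    have "snd ` ?F \<subseteq> {1..n} - R'" using sub by auto
    then have RC: "{1..n} - R \<subseteq> {1..n} - R'" using rc(2) by simp
    have "R' \<subseteq> R"
    proof
      fix x assume x: "x \<in> R'"
      then have "x \<in> {1..n}" using a by blast
      then show "x \<in> R" using RC x by blast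
    qed
    then show "R' = R" using RR by blast
  next
    assume a: "R' = R"
    have FD: "?F \<in> DeltaR n R" unfolding DeltaR_def using FD' sq by blast
    have "\<forall>G\<in>DeltaR n R. ?F \<subseteq> G \<longrightarrow> G = ?F"
    proof (intro ballI impI)
      fix G assume "G \<in> DeltaR n R" "?F \<subseteq> G"
      then have "G \<in> Delta' n" "?F \<subseteq> G" unfolding DeltaR_def by auto
      then show "G = ?F" using mx by blast
    qed
    then have "?F \<in> facets (DeltaR n R)" using FD unfolding facets_iff by blast
    moreover have "R \<subset> {1..n}" using R by blast
    ultimately show "R' \<noteq> {} \<and> R' \<subset> {1..n} \<and> ?F \<in> facets (DeltaR n R')" using a R(1) by blast
  qed
  show ?thesis unfolding block_def using P by simp
qed

lemma path_of_eq:
  assumes d: "pdata n R s" and n: "n \<ge> 2"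
  shows "path_of n (path_set n R s) = s"
proof -
  have P: "is_path_steps (card R) (card ({1..n} - R)) s' \<and> path_set n R s' = path_set n R s \<longleftrightarrow> s' = s" for s'
  proof
    assume a: "is_path_steps (card R) (card ({1..n} - R)) s' \<and> path_set n R s' = path_set n R s"
    then have "pdata n R s'" using d by (simp add: pdata_def)
    then show "s' = s" using path_unique[OF _ d] a by blast
  qed (use d in \<open>simp add: pdata_def\<close>)
  show ?thesis unfolding path_of_def Let_def block_eq[OF d n] using P by simp
qed


definition LexL :: "nat list \<Rightarrow> nat list \<Rightarrow> bool" where
  "LexL a b \<longleftrightarrow> (\<exists>j. j < length a \<and> j < length b \<and> take j a = take j b \<and> a ! j < b ! j)
     \<or> (length a < length b \<and> a = take (length a) b)"

lemma subset_less_LexL: "subset_less S R \<longleftrightarrow> LexL (sorted_list_of_set S) (sorted_list_of_set R)"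
  unfolding subset_less_def LexL_def Let_def by (rule refl)

lemma LexL_nil1: "LexL [] b \<longleftrightarrow> b \<noteq> []"
  unfolding LexL_def by auto

lemma LexL_nil2: "\<not> LexL a []"
  unfolding LexL_def by auto

lemma LexL_cons: "LexL (x # a) (y # b) \<longleftrightarrow> x < y \<or> (x = y \<and> LexL a b)"
proof
  assume "LexL (x # a) (y # b)"
  then consider (j) j where "j < length (x # a)" "j < length (y # b)"
      "take j (x # a) = take j (y # b)" "(x # a) ! j < (y # b) ! j"
    | (p) "length (x # a) < length (y # b)" "x # a = take (length (x # a)) (y # b)"
    unfolding LexL_def by blast
  then show "x < y \<or> (x = y \<and> LexL a b)"
  proof cases
    case j
    show ?thesis
    proof (cases j)
      case 0 then show ?thesis using j by simp
    next
      case (Suc j')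
      then have "x = y" "take j' a = take j' b" "a ! j' < b ! j'" "j' < length a" "j' < length b"
        using j by auto
      then show ?thesis unfolding LexL_def by blast
    qed
  next
    case p
    then have "x = y" "a = take (length a) b" "length a < length b" by auto
    then show ?thesis unfolding LexL_def by blast
  qed
next
  assume "x < y \<or> (x = y \<and> LexL a b)"
  then consider "x < y" | "x = y" "LexL a b" by blast
  then show "LexL (x # a) (y # b)"
  proof cases
    case 1
    then show ?thesis unfolding LexL_def by (intro disjI1 exI[of _ 0]) simp
  next
    case 2
    from 2(2) consider (j) j where "j < length a" "j < length b" "take j a = take j b" "a ! j < b ! j"
      | (p) "length a < length b" "a = take (length a) b"
      unfolding LexL_def by blast
    then show ?thesis
    proof cases
      case j
      then show ?thesis unfolding LexL_def using 2(1) by (intro disjI1 exI[of _ "Suc j"]) simp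
    next
      case p
      then show ?thesis unfolding LexL_def using 2(1) by (intro disjI2) simp
    qed
  qed
qed

lemma LexL_app: "LexL (P @ a) (P @ b) \<longleftrightarrow> LexL a b"
  by (induction P) (auto simp: LexL_cons)

lemma sl_split:
  assumes f: "finite S"
  shows "sorted_list_of_set S = sorted_list_of_set {x\<in>S. x < z} @ sorted_list_of_set {x\<in>S. z \<le> x}"
proof (rule sorted_distinct_set_unique)
  have f1: "finite {x\<in>S. x < z}" "finite {x\<in>S. z \<le> x}" using f by auto
  show "sorted (sorted_list_of_set S)" "distinct (sorted_list_of_set S)" by simp_all
  show "sorted (sorted_list_of_set {x\<in>S. x < z} @ sorted_list_of_set {x\<in>S. z \<le> x})"
    unfolding sorted_append using f1 by auto
  show "distinct (sorted_list_of_set {x\<in>S. x < z} @ sorted_list_of_set {x\<in>S. z \<le> x})"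
    using f1 by auto
  show "set (sorted_list_of_set S) = set (sorted_list_of_set {x\<in>S. x < z} @ sorted_list_of_set {x\<in>S. z \<le> x})"
    using f f1 by auto
qed

lemma sl_cases:
  assumes fS: "finite S" and fR: "finite R" and ne: "S \<noteq> R"
  defines "z \<equiv> Min ((S - R) \<union> (R - S))"
  shows "z \<in> S \<Longrightarrow> z \<notin> R \<Longrightarrow> subset_less S R \<longleftrightarrow> (\<exists>r\<in>R. z < r)"
    and "z \<in> R \<Longrightarrow> z \<notin> S \<Longrightarrow> subset_less S R \<longleftrightarrow> \<not> (\<exists>x\<in>S. z < x)"
proof -
  define D where "D = (S - R) \<union> (R - S)"
  have fD: "finite D" using fS fR by (simp add: D_def)
  have neD: "D \<noteq> {}" using ne by (auto simp: D_def)
  have zD: "z \<in> D" unfolding z_def D_def[symmetric] using fD neD by simp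
  have zmin: "\<And>x. x \<in> D \<Longrightarrow> z \<le> x" unfolding z_def D_def[symmetric] using fD by simp
  have low: "{x\<in>S. x < z} = {x\<in>R. x < z}"
  proof -
    have "x \<in> S \<longleftrightarrow> x \<in> R" if "x < z" for x
      using zmin[of x] that by (auto simp: D_def)
    then show ?thesis by auto
  qed
  define P where "P = sorted_list_of_set {x\<in>S. x < z}"
  have eS: "sorted_list_of_set S = P @ sorted_list_of_set {x\<in>S. z \<le> x}"
    using sl_split[OF fS] by (simp add: P_def)
  have eR: "sorted_list_of_set R = P @ sorted_list_of_set {x\<in>R. z \<le> x}"
    using sl_split[OF fR] low by (simp add: P_def)
  have sl_eq: "subset_less S R \<longleftrightarrow> LexL (sorted_list_of_set {x\<in>S. z \<le> x}) (sorted_list_of_set {x\<in>R. z \<le> x})"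
    unfolding subset_less_LexL eS eR LexL_app by (rule refl)
  have hd_form: "sorted_list_of_set T = Min T # sorted_list_of_set (T - {Min T})" if "finite T" "T \<noteq> {}" for T :: "nat set"
    using sorted_list_of_set_nonempty[OF that] .
  show "subset_less S R \<longleftrightarrow> (\<exists>r\<in>R. z < r)" if zs: "z \<in> S" "z \<notin> R"
  proof -
    let ?TS = "{x\<in>S. z \<le> x}" and ?TR = "{x\<in>R. z \<le> x}"
    have mS: "Min ?TS = z" using zs fS by (intro Min_eqI) auto
    have TSne: "?TS \<noteq> {}" using zs by auto
    have TR: "?TR = {x\<in>R. z < x}" using zs by (auto simp: order_le_less)
    show ?thesis
    proof (cases "?TR = {}")
      case True
      then have "\<not> (\<exists>r\<in>R. z < r)" using TR by auto
      moreover have "\<not> subset_less S R" unfolding sl_eq True by (simp add: LexL_nil2)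
      ultimately show ?thesis by simp
    next
      case False
      have fTR: "finite ?TR" using fR by simp
      have "Min ?TR \<in> ?TR" using Min_in[OF fTR False] .
      then have gt: "z < Min ?TR" using TR by auto
      have "subset_less S R" unfolding sl_eq
        using hd_form[of ?TS] hd_form[OF fTR False] TSne fS mS gt by (simp add: LexL_cons)
      moreover have "\<exists>r\<in>R. z < r" using False TR by auto
      ultimately show ?thesis by simp
    qed
  qed
  show "subset_less S R \<longleftrightarrow> \<not> (\<exists>x\<in>S. z < x)" if zr: "z \<in> R" "z \<notin> S"
  proof -
    let ?TS = "{x\<in>S. z \<le> x}" and ?TR = "{x\<in>R. z \<le> x}"
    have mR: "Min ?TR = z" using zr fR by (intro Min_eqI) auto
    have TRne: "?TR \<noteq> {}" using zr by auto
    have TS: "?TS = {x\<in>S. z < x}" using zr by (auto simp: order_le_less)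
    show ?thesis
    proof (cases "?TS = {}")
      case True
      then have "\<not> (\<exists>x\<in>S. z < x)" using TS by auto
      moreover have "subset_less S R" unfolding sl_eq True
        using TRne fR by (simp add: LexL_nil1)
      ultimately show ?thesis by simp
    next
      case False
      have fTS: "finite ?TS" using fS by simp
      have "Min ?TS \<in> ?TS" using Min_in[OF fTS False] .
      then have gt: "z < Min ?TS" using TS by auto
      have "\<not> subset_less S R" unfolding sl_eq
        using hd_form[of ?TR] hd_form[OF fTS False] TRne fR mR gt by (simp add: LexL_cons)
      moreover have "\<exists>x\<in>S. z < x" using False TS by auto
      ultimately show ?thesis by simp
    qed
  qed
qed

lemma subset_less_irrefl: "\<not> subset_less S S"
  unfolding subset_less_LexL using LexL_app[of "sorted_list_of_set S" "[]" "[]"] by (simp add: LexL_nil2)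

lemma symdiff_single: "(S - R) \<union> (R - S) = {c} \<Longrightarrow> Min ((S - R) \<union> (R - S)) = c"
  by simp

lemma L1:
  assumes f: "finite R" and c: "c \<notin> R" "c < Max R" and ne: "R \<noteq> {}"
  shows "subset_less (insert c R) R"
proof -
  have "(insert c R - R) \<union> (R - insert c R) = {c}" using c by auto
  then have z: "Min ((insert c R - R) \<union> (R - insert c R)) = c" by simp
  have "insert c R \<noteq> R" using c by auto
  note sc = sl_cases(1)[of "insert c R" R, OF _ f this]
  have ex: "\<exists>r\<in>R. c < r" using Max_in[OF f ne] c by blast
  show ?thesis using sc[unfolded z] ex c f by simp
qed

lemma L2:
  assumes f: "finite R" and c: "card R \<ge> 2"
  shows "subset_less (R - {Max R}) R"
proof -
  have ne: "R \<noteq> {}" using c by auto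
  have m: "Max R \<in> R" using Max_in[OF f ne] .
  have "(R - {Max R} - R) \<union> (R - (R - {Max R})) = {Max R}" using m by auto
  then have z: "Min ((R - {Max R} - R) \<union> (R - (R - {Max R}))) = Max R" by simp
  have "R - {Max R} \<noteq> R" using m by auto
  from sl_cases(2)[of "R - {Max R}" R, OF _ f this] z m f show ?thesis
    using Max_ge[OF f] by (auto simp: not_less)
qed

lemma L3:
  assumes f: "finite R" and c: "c \<notin> R" "\<forall>r\<in>R. r < c"
  shows "subset_less R (insert c R)"
proof -
  have "(R - insert c R) \<union> (insert c R - R) = {c}" using c by auto
  then have z: "Min ((R - insert c R) \<union> (insert c R - R)) = c" by simp
  have "R \<noteq> insert c R" using c by auto
  from sl_cases(2)[of R "insert c R", OF f _ this] z c f show ?thesis by auto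
qed

lemma L4:
  assumes f: "finite R" and u: "u \<in> R" "u \<noteq> Max R"
  shows "subset_less R (R - {u})"
proof -
  have ne: "R \<noteq> {}" using u by auto
  have "(R - (R - {u})) \<union> ((R - {u}) - R) = {u}" using u by auto
  then have z: "Min ((R - (R - {u})) \<union> ((R - {u}) - R)) = u" by simp
  have "R \<noteq> R - {u}" using u by auto
  moreover have "u < Max R" using Max_ge[OF f u(1)] u(2) by simp
  ultimately show ?thesis using sl_cases(1)[of R "R - {u}", OF f _ \<open>R \<noteq> R - {u}\<close>] z u f Max_in[OF f ne]
    by auto
qed

lemma D_minus:
  assumes fS: "finite S" and fR: "finite R" and neR: "R \<noteq> {}" and l: "subset_less S R"
  shows "(\<exists>u\<in>S. u \<notin> R \<and> u < Max R) \<or> (S \<subseteq> R \<and> Max R \<notin> S)"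
proof -
  have ne: "S \<noteq> R" using l subset_less_irrefl by blast
  define D where "D = (S - R) \<union> (R - S)"
  define z where "z = Min D"
  have fD: "finite D" using fS fR by (simp add: D_def)
  have neD: "D \<noteq> {}" using ne by (auto simp: D_def)
  have zD: "z \<in> D" unfolding z_def using fD neD by simp
  have zmin: "\<And>x. x \<in> D \<Longrightarrow> z \<le> x" unfolding z_def using fD by simp
  note c = sl_cases[OF fS fR ne, folded D_def, folded z_def]
  show ?thesis
  proof (cases "z \<in> S")
    case True
    then have zr: "z \<notin> R" using zD by (auto simp: D_def)
    then obtain r where "r \<in> R" "z < r" using c(1)[OF True zr] l by blast
    then have "z < Max R" using Max_ge[OF fR] by (meson less_le_trans)
    then show ?thesis using True zr by blast
  next
    case False
    then have zr: "z \<in> R" using zD by (auto simp: D_def)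
    have no: "\<not> (\<exists>x\<in>S. z < x)" using c(2)[OF zr False] l by blast
    have SR: "S \<subseteq> R"
    proof
      fix x assume x: "x \<in> S"
      then have "x < z" using no False by (metis linorder_neqE_nat)
      then have "x \<notin> D" using zmin by force
      then show "x \<in> R" using x by (auto simp: D_def)
    qed
    have "Max R \<notin> S" using no Max_ge[OF fR zr] False by force
    then show ?thesis using SR by blast
  qed
qed

lemma D_plus:
  assumes fS: "finite S" and fR: "finite R" and neR: "R \<noteq> {}" and l: "subset_less R S"
  shows "(\<exists>u\<in>R. u \<notin> S \<and> u \<noteq> Max R) \<or> (\<exists>w\<in>S. w \<notin> R \<and> Max R < w)"
proof -
  have ne: "R \<noteq> S" using l subset_less_irrefl by blast
  define D where "D = (R - S) \<union> (S - R)"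
  define z where "z = Min D"
  have fD: "finite D" using fS fR by (simp add: D_def)
  have neD: "D \<noteq> {}" using ne by (auto simp: D_def)
  have zD: "z \<in> D" unfolding z_def using fD neD by simp
  note c = sl_cases[OF fR fS ne, folded D_def, folded z_def]
  show ?thesis
  proof (cases "z \<in> R")
    case True
    then have zs: "z \<notin> S" using zD by (auto simp: D_def)
    then obtain x where x: "x \<in> S" "z < x" using c(1)[OF True zs] l by blast
    show ?thesis
    proof (cases "z = Max R")
      case True
      then have "x \<notin> R" using x Max_ge[OF fR] by force
      then show ?thesis using x True by blast
    next
      case False
      then show ?thesis using \<open>z \<in> R\<close> zs by blast
    qed
  next
    case False
    then have zs: "z \<in> S" using zD by (auto simp: D_def)
    have no: "\<not> (\<exists>r\<in>R. z < r)" using c(2)[OF zs False] l by blast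
    have "Max R \<in> R" using Max_in[OF fR neR] .
    then have "Max R < z" using no False by (metis linorder_neqE_nat)
    then show ?thesis using zs False by blast
  qed
qed


lemma U_const: "j \<le> j' \<Longrightarrow> j' \<le> length s \<Longrightarrow> (\<forall>i. j \<le> i \<and> i < j' \<longrightarrow> \<not> s ! i) \<Longrightarrow> U s j' = U s j"
proof (induction j' rule: dec_induct)
  case base then show ?case by simp
next
  case (step m)
  then have "U s m = U s j" by simp
  moreover have "\<not> s ! m" using step by simp
  ultimately show ?case using U_Suc[of m s] step by simp
qed

lemma H_const: "j \<le> j' \<Longrightarrow> j' \<le> length s \<Longrightarrow> (\<forall>i. j \<le> i \<and> i < j' \<longrightarrow> s ! i) \<Longrightarrow> H s j' = H s j"
proof (induction j' rule: dec_induct)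
  case base then show ?case by simp
next
  case (step m)
  then have "H s m = H s j" by simp
  moreover have "s ! m" using step by simp
  ultimately show ?case using H_Suc[of m s] step by simp
qed

lemma U_incr: "j \<le> j' \<Longrightarrow> j' \<le> length s \<Longrightarrow> U s j < U s j' \<Longrightarrow> \<exists>i. j \<le> i \<and> i < j' \<and> s ! i"
  using U_const by fastforce

lemma H_incr: "j \<le> j' \<Longrightarrow> j' \<le> length s \<Longrightarrow> H s j < H s j' \<Longrightarrow> \<exists>i. j \<le> i \<and> i < j' \<and> \<not> s ! i"
  using H_const by fastforce

lemma U_step: "j < j' \<Longrightarrow> j' \<le> length s \<Longrightarrow> s ! j \<Longrightarrow> U s j < U s j'"
proof -
  assume a: "j < j'" "j' \<le> length s" "s ! j"
  have "U s (Suc j) = U s j + 1" using U_Suc[of j s] a by simp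
  moreover have "U s (Suc j) \<le> U s j'" using U_mono a by simp
  ultimately show ?thesis by simp
qed

lemma H_step: "j < j' \<Longrightarrow> j' \<le> length s \<Longrightarrow> \<not> s ! j \<Longrightarrow> H s j < H s j'"
proof -
  assume a: "j < j'" "j' \<le> length s" "\<not> s ! j"
  have "H s (Suc j) = H s j + 1" using H_Suc[of j s] a by simp
  moreover have "H s (Suc j) \<le> H s j'" using H_mono a by simp
  ultimately show ?thesis by simp
qed

lemma H_unique_iff:
  assumes k: "k \<le> length s"
  shows "(\<forall>k'\<le>length s. H s k' = H s k \<longrightarrow> k' = k) \<longleftrightarrow> ((k = 0 \<or> \<not> s ! (k - 1)) \<and> (k = length s \<or> \<not> s ! k))"
proof
  assume u: "\<forall>k'\<le>length s. H s k' = H s k \<longrightarrow> k' = k"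
  have 1: "k = 0 \<or> \<not> s ! (k - 1)"
  proof (rule ccontr)
    assume "\<not> ?thesis"
    then have "0 < k" "s ! (k - 1)" by auto
    then have eq: "H s (k - 1) = H s k" using H_Suc[of "k - 1" s] k by simp
    have "k - 1 \<le> length s" using k by simp
    then have "k - 1 = k" using u eq by blast
    then show False using \<open>0 < k\<close> by simp
  qed
  have 2: "k = length s \<or> \<not> s ! k"
  proof (rule ccontr)
    assume "\<not> ?thesis"
    then have "k < length s" "s ! k" using k by auto
    then have "H s (Suc k) = H s k" using H_Suc[of k s] by simp
    then show False using u[rule_format, of "Suc k"] \<open>k < length s\<close> by simp
  qed
  show "(k = 0 \<or> \<not> s ! (k - 1)) \<and> (k = length s \<or> \<not> s ! k)" using 1 2 by blast
next
  assume c: "(k = 0 \<or> \<not> s ! (k - 1)) \<and> (k = length s \<or> \<not> s ! k)"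
  show "\<forall>k'\<le>length s. H s k' = H s k \<longrightarrow> k' = k"
  proof (intro allI impI)
    fix k' assume k': "k' \<le> length s" "H s k' = H s k"
    show "k' = k"
    proof (rule ccontr)
      assume "k' \<noteq> k"
      then consider "k < k'" | "k' < k" by linarith
      then show False
      proof cases
        case 1
        then have "\<not> s ! k" using c k' by auto
        then show False using H_step[OF 1 k'(1)] k' by simp
      next
        case 2
        then have "\<not> s ! (k - 1)" "k - 1 < k" using c by auto
        then have "H s (k - 1) < H s k" using H_step[of "k-1" k s] k by simp
        moreover have "H s k' \<le> H s (k - 1)" using H_mono 2 by simp
        ultimately show False using k' by simp
      qed
    qed
  qed
qed

lemma U_unique_iff:
  assumes k: "k \<le> length s"
  shows "(\<forall>k'\<le>length s. U s k' = U s k \<longrightarrow> k' = k) \<longleftrightarrow> ((k = 0 \<or> s ! (k - 1)) \<and> (k = length s \<or> s ! k))"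
proof
  assume u: "\<forall>k'\<le>length s. U s k' = U s k \<longrightarrow> k' = k"
  have 1: "k = 0 \<or> s ! (k - 1)"
  proof (rule ccontr)
    assume "\<not> ?thesis"
    then have "0 < k" "\<not> s ! (k - 1)" by auto
    then have eq: "U s (k - 1) = U s k" using U_Suc[of "k - 1" s] k by simp
    have "k - 1 \<le> length s" using k by simp
    then have "k - 1 = k" using u eq by blast
    then show False using \<open>0 < k\<close> by simp
  qed
  have 2: "k = length s \<or> s ! k"
  proof (rule ccontr)
    assume "\<not> ?thesis"
    then have "k < length s" "\<not> s ! k" using k by auto
    then have "U s (Suc k) = U s k" using U_Suc[of k s] by simp
    then show False using u[rule_format, of "Suc k"] \<open>k < length s\<close> by simp
  qed
  show "(k = 0 \<or> s ! (k - 1)) \<and> (k = length s \<or> s ! k)" using 1 2 by blast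
next
  assume c: "(k = 0 \<or> s ! (k - 1)) \<and> (k = length s \<or> s ! k)"
  show "\<forall>k'\<le>length s. U s k' = U s k \<longrightarrow> k' = k"
  proof (intro allI impI)
    fix k' assume k': "k' \<le> length s" "U s k' = U s k"
    show "k' = k"
    proof (rule ccontr)
      assume "k' \<noteq> k"
      then consider "k < k'" | "k' < k" by linarith
      then show False
      proof cases
        case 1
        then have "s ! k" using c k' by auto
        then show False using U_step[OF 1 k'(1)] k' by simp
      next
        case 2
        then have "s ! (k - 1)" "k - 1 < k" using c by auto
        then have "U s (k - 1) < U s k" using U_step[of "k-1" k s] k by simp
        moreover have "U s k' \<le> U s (k - 1)" using U_mono 2 by simp
        ultimately show False using k' by simp
      qed
    qed
  qed
qed

lemma oc_iff:
  assumes k: "k \<le> length s"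
  shows "only_in_col (path_walk R s) k \<longleftrightarrow> ((k = 0 \<or> \<not> s ! (k - 1)) \<and> (k = length s \<or> \<not> s ! k))"
proof -
  have "only_in_col (path_walk R s) k \<longleftrightarrow> (\<forall>k'\<le>length s. H s k' = H s k \<longrightarrow> k' = k)"
    unfolding only_in_col_def using path_walk_nth k
    by (auto simp: path_walk_def less_Suc_eq_le)
  then show ?thesis using H_unique_iff[OF k] by simp
qed

lemma or_iff:
  assumes d: "pdata n R s" and k: "k \<le> length s"
  shows "only_in_row (path_walk R s) k \<longleftrightarrow> ((k = 0 \<or> s ! (k - 1)) \<and> (k = length s \<or> s ! k))"
proof -
  note b = pdata_basic[OF d]
  have e: "fst (path_walk R s ! k') = fst (path_walk R s ! k) \<longleftrightarrow> U s k' = U s k" if "k' \<le> length s" for k'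
  proof -
    have "U s k' \<le> card R - 1" "U s k \<le> card R - 1" using U_le_total[OF that] U_le_total[OF k] b(6) by auto
    then show ?thesis using path_walk_nth[OF that] path_walk_nth[OF k] by auto
  qed
  have "only_in_row (path_walk R s) k \<longleftrightarrow> (\<forall>k'\<le>length s. U s k' = U s k \<longrightarrow> k' = k)"
    unfolding only_in_row_def using e by (auto simp: path_walk_def less_Suc_eq_le)
  then show ?thesis using U_unique_iff[OF k] by simp
qed

definition mcond :: "nat \<Rightarrow> nat set \<Rightarrow> bool list \<Rightarrow> nat \<Rightarrow> bool" where
  "mcond n R s k \<longleftrightarrow> left_turn s k
     \<or> (bullet_pt s (path_walk R s) k \<and> snd (ppt n R s k) < Max R)
     \<or> (circle_pt s (path_walk R s) k \<and> fst (ppt n R s k) = Max R)"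

lemma minus_eq:
  assumes d: "pdata n R s" and n: "n \<ge> 2"
  shows "minus_part n (path_set n R s) = {ppt n R s k | k. k \<le> length s \<and> mcond n R s k}"
proof -
  have e1: "path_pt n R (path_walk R s ! k) = ppt n R s k" if "k \<le> length s" for k
    using ppt_eq[OF that] .
  have e2: "grid_cols n R ! snd (path_walk R s ! k) = snd (ppt n R s k)" if "k \<le> length s" for k
    using path_walk_nth[OF that] unfolding ppt_def by simp
  have e3: "grid_rows R ! fst (path_walk R s ! k) = fst (ppt n R s k)" if "k \<le> length s" for k
    using path_walk_nth[OF that] unfolding ppt_def by simp
  have len: "length (path_walk R s) = Suc (length s)" by (simp add: path_walk_def)
  define c where "c k = (left_turn s k
         \<or> (bullet_pt s (path_walk R s) k \<and> grid_cols n R ! snd (path_walk R s ! k) < Max R)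
         \<or> (circle_pt s (path_walk R s) k \<and> grid_rows R ! fst (path_walk R s ! k) = Max R))" for k
  have ce: "c k = mcond n R s k" if "k \<le> length s" for k
    unfolding c_def mcond_def using e2[OF that] e3[OF that] by simp
  have mp: "minus_part n (path_set n R s) = {path_pt n R (path_walk R s ! k) | k. k < length (path_walk R s) \<and> c k}"
    unfolding minus_part_def Let_def block_eq[OF d n] path_of_eq[OF d n] c_def by (rule refl)
  show ?thesis
  proof (intro set_eqI iffI)
    fix x assume "x \<in> minus_part n (path_set n R s)"
    then obtain k where k: "k < length (path_walk R s)" "x = path_pt n R (path_walk R s ! k)" "c k"
      unfolding mp by blast
    have kl: "k \<le> length s" using k(1) len by simp
    have "x = ppt n R s k \<and> k \<le> length s \<and> mcond n R s k" using k kl e1 ce by simp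
    then show "x \<in> {ppt n R s k | k. k \<le> length s \<and> mcond n R s k}" by blast
  next
    fix x assume "x \<in> {ppt n R s k | k. k \<le> length s \<and> mcond n R s k}"
    then obtain k where k: "k \<le> length s" "x = ppt n R s k" "mcond n R s k" by blast
    have "k < length (path_walk R s) \<and> x = path_pt n R (path_walk R s ! k) \<and> c k"
      using k e1 ce len by simp
    then show "x \<in> minus_part n (path_set n R s)" unfolding mp by blast
  qed
qed

lemma ppt_fst_max:
  assumes d: "pdata n R s" and k: "k \<le> length s"
  shows "fst (ppt n R s k) = Max R \<longleftrightarrow> U s k = 0"
proof -
  note b = pdata_basic[OF d]
  have ne: "R \<noteq> {}" using d by (simp add: pdata_def)
  have m: "Max R = grid_rows R ! (card R - 1)" using sl_last[OF b(1) ne] by (simp add: grid_rows_def)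
  have u: "U s k \<le> card R - 1" using U_le_total[OF k] b(6) by simp
  have "fst (ppt n R s k) = Max R \<longleftrightarrow> card R - 1 - U s k = card R - 1"
    unfolding m ppt_def grid_rows_def using sl_eq_iff[OF b(1), of "card R - 1 - U s k" "card R - 1"] b(2)
    by simp
  then show ?thesis using u by linarith
qed

lemma cross_inj:
  assumes d: "pdata n R s" and d': "pdata n R t" and j: "j \<le> length s" and k: "k \<le> length t"
    and e: "ppt n R s j = ppt n R t k"
  shows "U s j = U t k" "H s j = H t k"
proof -
  note b = pdata_basic[OF d] and b' = pdata_basic[OF d']
  note bj = ppt_bounds[OF d j] and bk = ppt_bounds[OF d' k]
  have "card R - 1 - U s j = card R - 1 - U t k"
    using e bj(1) bk(1) sl_eq_iff[OF b(1)] unfolding ppt_def grid_rows_def by simp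
  moreover have "U s j \<le> card R - 1" using U_le_total[OF j] b(6) by simp
  moreover have "U t k \<le> card R - 1" using U_le_total[OF k] b'(6) by simp
  ultimately show "U s j = U t k" by linarith
  show "H s j = H t k"
    using e bj(2) bk(2) sl_eq_iff[of "{1..n} - R"] unfolding ppt_def grid_cols_def by simp
qed

lemma col_unique:
  assumes d: "pdata n R s" and k: "k \<le> length s" and oc: "only_in_col (path_walk R s) k"
    and y: "y \<in> path_set n R s" and e: "snd y = snd (ppt n R s k)"
  shows "y = ppt n R s k"
proof -
  obtain k' where k': "k' \<le> length s" "y = ppt n R s k'" using y unfolding path_set_ppt by auto
  have "H s k' = H s k"
    using e k' ppt_bounds(2)[OF d k] ppt_bounds(2)[OF d k'(1)] sl_eq_iff[of "{1..n} - R"]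
    unfolding ppt_def grid_cols_def by simp
  then have "k' = k" using oc oc_iff[OF k] H_unique_iff[OF k] k' by blast
  then show ?thesis using k' by simp
qed

lemma row_unique:
  assumes d: "pdata n R s" and k: "k \<le> length s" and orr: "only_in_row (path_walk R s) k"
    and y: "y \<in> path_set n R s" and e: "fst y = fst (ppt n R s k)"
  shows "y = ppt n R s k"
proof -
  note b = pdata_basic[OF d]
  obtain k' where k': "k' \<le> length s" "y = ppt n R s k'" using y unfolding path_set_ppt by auto
  have "card R - 1 - U s k' = card R - 1 - U s k"
    using e k' ppt_bounds(1)[OF d k] ppt_bounds(1)[OF d k'(1)] sl_eq_iff[OF b(1)]
    unfolding ppt_def grid_rows_def by simp
  moreover have "U s k' \<le> card R - 1" "U s k \<le> card R - 1" using U_le_total[OF k] U_le_total[OF k'(1)] b(6) by auto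
  ultimately have "U s k' = U s k" by linarith
  then have "k' = k" using orr or_iff[OF d k] U_unique_iff[OF k] k' by blast
  then show ?thesis using k' by simp
qed

lemma block_facet:
  assumes G: "G \<in> facets (Delta' n)" and n: "n \<ge> 2"
  shows "block n G = fst ` G"
proof -
  obtain S t where "pdata n S t" "G = path_set n S t" using facets_pdata[OF n] G by blast
  then show ?thesis using block_eq path_rows_cols n by simp
qed


lemma mem_minus:
  assumes d: "pdata n R s" and n: "n \<ge> 2" and k: "k \<le> length s" and m: "mcond n R s k"
  shows "ppt n R s k \<in> minus_part n (path_set n R s)"
  using minus_eq[OF d n] k m by blast

lemma not_minus:
  assumes d: "pdata n R s" and n: "n \<ge> 2" and k: "k \<le> length s" and m: "\<not> mcond n R s k"
  shows "ppt n R s k \<in> path_set n R s - minus_part n (path_set n R s)"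
proof -
  have "ppt n R s k \<in> path_set n R s" unfolding path_set_ppt using k by blast
  moreover have "ppt n R s k \<notin> minus_part n (path_set n R s)"
  proof
    assume "ppt n R s k \<in> minus_part n (path_set n R s)"
    then obtain k' where k': "k' \<le> length s" "ppt n R s k = ppt n R s k'" "mcond n R s k'"
      unfolding minus_eq[OF d n] by blast
    then have "k = k'" using ppt_inj[OF d k] by simp
    then show False using m k' by simp
  qed
  ultimately show ?thesis by blast
qed

lemma H_total: "pdata n R s \<Longrightarrow> H s (length s) = card ({1..n} - R) - 1"
  using UH_sum[of "length s" s] U_len[of s] pdata_basic[of n R s] by simp

lemma U_total: "pdata n R s \<Longrightarrow> U s (length s) = card R - 1"
  using U_len[of s] pdata_basic[of n R s] by simp

lemma take_eq_UH: "take k s = take k t \<Longrightarrow> U s k = U t k \<and> H s k = H t k"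
  unfolding U_def H_def by simp

lemma not_in_G_col:
  assumes dS: "pdata n S t" and n: "n \<ge> 2" and x: "snd x \<in> S"
  shows "x \<notin> path_set n S t"
  using path_rows_cols(2)[OF dS n] x by force

lemma not_in_G_row:
  assumes dS: "pdata n S t" and n: "n \<ge> 2" and x: "fst x \<notin> S"
  shows "x \<notin> path_set n S t"
  using path_rows_cols(1)[OF dS n] x by force



lemma miss_minus:
  assumes dR: "pdata n R s" and dS: "pdata n S t" and n: "n \<ge> 2"
    and l: "subset_less S R \<or> (S = R \<and> steps_less t s)"
  shows "\<exists>x\<in>minus_part n (path_set n R s). x \<notin> path_set n S t"
proof -
  note bR = pdata_basic[OF dR] and bS = pdata_basic[OF dS]
  have Rne: "R \<noteq> {}" and RS: "R \<subseteq> {1..n}" using dR by (auto simp: pdata_def)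
  have Sne: "S \<noteq> {}" and SS: "S \<subseteq> {1..n}" using dS by (auto simp: pdata_def)
  from l show ?thesis
  proof
    assume sl: "subset_less S R"
    from D_minus[OF bS(1) bR(1) Rne sl] show ?thesis
    proof
      assume "\<exists>u\<in>S. u \<notin> R \<and> u < Max R"
      then obtain u where u: "u \<in> S" "u \<notin> R" "u < Max R" by blast
      have "u \<in> snd ` path_set n R s" using path_rows_cols(2)[OF dR n] u SS by blast
      then obtain ky where ky: "ky \<le> length s" "snd (ppt n R s ky) = u"
        unfolding path_set_ppt by auto
      define h where "h = H s ky"
      define k0 where "k0 = (LEAST k. H s k = h)"
      have hk0: "H s k0 = h" unfolding k0_def by (rule LeastI[of _ ky]) (simp add: h_def)
      have k0le: "k0 \<le> ky" unfolding k0_def by (rule Least_le) (simp add: h_def)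
      then have k0L: "k0 \<le> length s" using ky by simp
      have snd0: "snd (ppt n R s k0) = u" using ky hk0 unfolding h_def ppt_def by simp
      have prev: "\<not> s ! (k0 - 1)" if "0 < k0"
      proof
        assume "s ! (k0 - 1)"
        then have "H s (k0 - 1) = H s k0" using H_Suc[of "k0 - 1" s] that k0L by simp
        moreover have "\<not> H s (k0 - 1) = h" using not_less_Least[of "k0 - 1" "\<lambda>k. H s k = h"] that
          unfolding k0_def by simp
        ultimately show False using hk0 by simp
      qed
      have "mcond n R s k0"
      proof (cases "k0 < length s \<and> s ! k0")
        case True
        show ?thesis
        proof (cases "k0 = 0")
          case False
          then have "left_turn s k0" using True prev unfolding left_turn_def by simp
          then show ?thesis by (simp add: mcond_def)
        next
          case z: True
          have "only_in_row (path_walk R s) k0" using or_iff[OF dR k0L] z True by simp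
          moreover have "\<not> only_in_col (path_walk R s) k0" using oc_iff[OF k0L] z True by simp
          moreover have "\<not> left_turn s k0" "\<not> right_turn s k0" using z by (auto simp: left_turn_def right_turn_def)
          moreover have "fst (ppt n R s k0) = Max R" using ppt_fst_max[OF dR k0L] z by simp
          ultimately show ?thesis by (simp add: mcond_def circle_pt_def)
        qed
      next
        case False
        have "only_in_col (path_walk R s) k0" using oc_iff[OF k0L] False prev k0L by auto
        moreover have "\<not> left_turn s k0" using False unfolding left_turn_def by auto
        moreover have "\<not> right_turn s k0" using prev unfolding right_turn_def by auto
        ultimately show ?thesis using snd0 u(3) by (simp add: mcond_def bullet_pt_def)
      qed
      moreover have "ppt n R s k0 \<notin> path_set n S t" using not_in_G_col[OF dS n] snd0 u(1) by simp
      ultimately show ?thesis using mem_minus[OF dR n k0L] by blast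
    next
      assume SR: "S \<subseteq> R \<and> Max R \<notin> S"
      have "card R \<ge> 2"
      proof -
        obtain y where "y \<in> S" using Sne by blast
        then have sub: "{y, Max R} \<subseteq> R" and ne: "y \<noteq> Max R" using SR Max_in[OF bR(1) Rne] by auto
        have "card {y, Max R} = 2" using ne by simp
        then show ?thesis using card_mono[OF bR(1) sub] by simp
      qed
      then have "U s 0 < U s (length s)" using U_total[OF dR] by simp
      then have "\<exists>i. 0 \<le> i \<and> i < length s \<and> s ! i" using U_incr[of 0 "length s" s] by simp
      then obtain i where "i < length s" "s ! i" by blast
      define Q where "Q i = (i < length s \<and> s ! i)" for i
      define k0 where "k0 = (LEAST i. Q i)"
      have "Q k0" unfolding k0_def using \<open>i < length s\<close> \<open>s ! i\<close> by (intro LeastI[of Q i]) (simp add: Q_def)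
      then have k0: "k0 < length s" "s ! k0" by (auto simp: Q_def)
      have before: "\<not> s ! i" if "i < k0" for i
      proof -
        have "\<not> Q i" using not_less_Least[of i Q] that unfolding k0_def by blast
        then show ?thesis using that k0 by (simp add: Q_def)
      qed
      have k0L: "k0 \<le> length s" using k0 by simp
      have "U s k0 = U s 0" using U_const[of 0 k0 s] k0L before by simp
      then have fm: "fst (ppt n R s k0) = Max R" using ppt_fst_max[OF dR k0L] by simp
      have "mcond n R s k0"
      proof (cases "k0 = 0")
        case False
        then have "left_turn s k0" using k0 before[of "k0 - 1"] unfolding left_turn_def by simp
        then show ?thesis by (simp add: mcond_def)
      next
        case z: True
        have "only_in_row (path_walk R s) k0" using or_iff[OF dR k0L] z k0 by simp
        moreover have "\<not> only_in_col (path_walk R s) k0" using oc_iff[OF k0L] z k0 by simp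
        moreover have "\<not> left_turn s k0" "\<not> right_turn s k0" using z by (auto simp: left_turn_def right_turn_def)
        ultimately show ?thesis using fm by (simp add: mcond_def circle_pt_def)
      qed
      moreover have "ppt n R s k0 \<notin> path_set n S t" using not_in_G_row[OF dS n] fm SR by simp
      ultimately show ?thesis using mem_minus[OF dR n k0L] by blast
    qed
  next
    assume "S = R \<and> steps_less t s"
    then have SR: "S = R" and st: "steps_less t s" by auto
    have len: "length t = length s" using bR(5) bS(5) SR by simp
    obtain k where k: "k < length t" "k < length s" "take k t = take k s" "t ! k" "\<not> s ! k"
      using st unfolding steps_less_def by blast
    have eqk: "U t k = U s k" "H t k = H s k" using take_eq_UH[OF k(3)] by auto
    have "U t (Suc k) = U s k + 1" using U_Suc[OF k(1)] k(4) eqk by simp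
    moreover have "U s (Suc k) = U s k" using U_Suc[OF k(2)] k(5) by simp
    moreover have "U t (Suc k) \<le> U t (length t)" using U_mono k(1) by simp
    moreover have "U t (length t) = U s (length s)" using U_total[OF dR] U_total[OF dS] SR by simp
    ultimately have "U s (Suc k) < U s (length s)" by simp
    then have "\<exists>i. Suc k \<le> i \<and> i < length s \<and> s ! i" using U_incr[of "Suc k" "length s" s] k by simp
    then obtain i where i: "Suc k \<le> i" "i < length s" "s ! i" by blast
    define P where "P i = (Suc k \<le> i \<and> i < length s \<and> s ! i)" for i
    define k2 where "k2 = (LEAST i. P i)"
    have Pk2: "P k2" unfolding k2_def using i by (intro LeastI[of P i]) (simp add: P_def)
    then have k2: "Suc k \<le> k2" "k2 < length s" "s ! k2" by (auto simp: P_def)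
    have before: "\<not> s ! i" if "k \<le> i" "i < k2" for i
    proof (cases "i = k")
      case True then show ?thesis using k by simp
    next
      case False
      have "\<not> P i" using not_less_Least[of i P] that(2) unfolding k2_def by blast
      then show ?thesis using that k2 False by (auto simp: P_def)
    qed
    have k2L: "k2 \<le> length s" using k2 by simp
    have "left_turn s k2" using k2 before[of "k2 - 1"] unfolding left_turn_def by auto
    then have mc: "mcond n R s k2" by (simp add: mcond_def)
    have Uk2: "U s k2 = U s k" using U_const[of k k2 s] k2 before by simp
    have Hk2: "H s k < H s k2" using H_step[of k k2 s] k2 k by simp
    have "ppt n R s k2 \<notin> path_set n S t"
    proof
      assume "ppt n R s k2 \<in> path_set n S t"
      then obtain j where j: "j \<le> length t" "ppt n R s k2 = ppt n R t j"
        unfolding path_set_ppt SR by auto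
      have dS': "pdata n R t" using dS SR by simp
      note ci = cross_inj[OF dR dS' k2L j]
      show False
      proof (cases "k < j")
        case True
        then have "U t (Suc k) \<le> U t j" using U_mono by simp
        then show False using ci(1) Uk2 eqk \<open>U t (Suc k) = U s k + 1\<close> by simp
      next
        case False
        then have "H t j \<le> H t k" using H_mono by simp
        then show False using ci(2) eqk Hk2 by simp
      qed
    qed
    then show ?thesis using mem_minus[OF dR n k2L mc] by blast
  qed
qed



lemma miss_plus:
  assumes dR: "pdata n R s" and dS: "pdata n S t" and n: "n \<ge> 2"
    and l: "subset_less R S \<or> (R = S \<and> steps_less s t)"
  shows "\<exists>x\<in>path_set n R s - minus_part n (path_set n R s). x \<notin> path_set n S t"
proof -
  note bR = pdata_basic[OF dR] and bS = pdata_basic[OF dS]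
  have Rne: "R \<noteq> {}" and RS: "R \<subseteq> {1..n}" using dR by (auto simp: pdata_def)
  have Sne: "S \<noteq> {}" and SS: "S \<subseteq> {1..n}" using dS by (auto simp: pdata_def)
  from l show ?thesis
  proof
    assume sl: "subset_less R S"
    from D_plus[OF bS(1) bR(1) Rne sl] show ?thesis
    proof
      assume "\<exists>u\<in>R. u \<notin> S \<and> u \<noteq> Max R"
      then obtain u where u: "u \<in> R" "u \<notin> S" "u \<noteq> Max R" by blast
      have "u \<in> fst ` path_set n R s" using path_rows_cols(1)[OF dR n] u by blast
      then obtain ky where ky: "ky \<le> length s" "fst (ppt n R s ky) = u"
        unfolding path_set_ppt by auto
      define v where "v = U s ky"
      define Q where "Q k = (U s k = v)" for k
      define k0 where "k0 = (LEAST k. Q k)"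
      have "Q k0" unfolding k0_def by (rule LeastI[of _ ky]) (simp add: Q_def v_def)
      then have vk0: "U s k0 = v" by (simp add: Q_def)
      have k0le: "k0 \<le> ky" unfolding k0_def by (rule Least_le) (simp add: Q_def v_def)
      then have k0L: "k0 \<le> length s" using ky by simp
      have fst0: "fst (ppt n R s k0) = u" using ky vk0 unfolding v_def ppt_def by simp
      have "v \<noteq> 0" using ppt_fst_max[OF dR ky(1)] ky(2) u(3) by (simp add: v_def)
      then have k0pos: "0 < k0" using vk0 by (cases k0) auto
      have prev: "s ! (k0 - 1)"
      proof (rule ccontr)
        assume "\<not> s ! (k0 - 1)"
        then have "U s (k0 - 1) = U s k0" using U_Suc[of "k0 - 1" s] k0pos k0L by simp
        moreover have "\<not> Q (k0 - 1)" using not_less_Least[of "k0 - 1" Q] k0pos unfolding k0_def by simp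
        ultimately show False using vk0 by (simp add: Q_def)
      qed
      have "\<not> mcond n R s k0"
      proof -
        have "\<not> left_turn s k0" using prev by (simp add: left_turn_def)
        moreover have "\<not> only_in_col (path_walk R s) k0" using oc_iff[OF k0L] prev k0pos by simp
        ultimately show ?thesis using fst0 u(3) by (simp add: mcond_def bullet_pt_def)
      qed
      moreover have "ppt n R s k0 \<notin> path_set n S t" using not_in_G_row[OF dS n] fst0 u(2) by simp
      ultimately show ?thesis using not_minus[OF dR n k0L] by blast
    next
      assume "\<exists>w\<in>S. w \<notin> R \<and> Max R < w"
      then obtain w where w: "w \<in> S" "w \<notin> R" "Max R < w" by blast
      have "w \<in> snd ` path_set n R s" using path_rows_cols(2)[OF dR n] w SS by blast
      then obtain ky where ky: "ky \<le> length s" "snd (ppt n R s ky) = w"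
        unfolding path_set_ppt by auto
      define h where "h = H s ky"
      define Q where "Q k = (k \<le> length s \<and> H s k = h)" for k
      define k0 where "k0 = (GREATEST k. Q k)"
      have Qky: "Q ky" using ky by (simp add: Q_def h_def)
      have bnd: "\<And>y. Q y \<Longrightarrow> y \<le> length s" by (simp add: Q_def)
      have "Q k0" unfolding k0_def by (rule GreatestI_nat[of Q ky, OF Qky bnd])
      then have k0L: "k0 \<le> length s" and hk0: "H s k0 = h" by (auto simp: Q_def)
      have grt: "k \<le> k0" if "Q k" for k unfolding k0_def by (rule Greatest_le_nat[of Q k, OF that bnd])
      have snd0: "snd (ppt n R s k0) = w" using ky hk0 unfolding h_def ppt_def by simp
      have nxt: "\<not> s ! k0" if "k0 < length s"
      proof
        assume "s ! k0"
        then have "H s (Suc k0) = H s k0" using H_Suc[OF that] by simp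
        then have "Q (Suc k0)" using that hk0 by (simp add: Q_def)
        then show False using grt by fastforce
      qed
      have "\<not> mcond n R s k0"
      proof -
        have "\<not> left_turn s k0" using nxt by (auto simp: left_turn_def)
        moreover have "\<not> (circle_pt s (path_walk R s) k0 \<and> fst (ppt n R s k0) = Max R)"
        proof
          assume c: "circle_pt s (path_walk R s) k0 \<and> fst (ppt n R s k0) = Max R"
          then have u0: "U s k0 = 0" using ppt_fst_max[OF dR k0L] by simp
          have "only_in_row (path_walk R s) k0" using c by (simp add: circle_pt_def)
          then have "k0 = length s \<or> s ! k0" using or_iff[OF dR k0L] by simp
          then have kL: "k0 = length s" using nxt k0L by fastforce
          have "\<not> only_in_col (path_walk R s) k0" using c by (simp add: circle_pt_def)
          then have "k0 \<noteq> 0 \<and> s ! (k0 - 1)" using oc_iff[OF k0L] kL by auto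
          then have "U s (k0 - 1) < U s k0" using U_step[of "k0 - 1" k0 s] k0L by simp
          then show False using u0 by simp
        qed
        ultimately show ?thesis using snd0 w(3) by (auto simp: mcond_def)
      qed
      moreover have "ppt n R s k0 \<notin> path_set n S t" using not_in_G_col[OF dS n] snd0 w(1) by simp
      ultimately show ?thesis using not_minus[OF dR n k0L] by blast
    qed
  next
    assume "R = S \<and> steps_less s t"
    then have SR: "S = R" and st: "steps_less s t" by auto
    have len: "length t = length s" using bR(5) bS(5) SR by simp
    obtain k where k: "k < length s" "k < length t" "take k s = take k t" "s ! k" "\<not> t ! k"
      using st unfolding steps_less_def by blast
    have eqk: "U t k = U s k" "H t k = H s k" using take_eq_UH[OF k(3)] by auto
    have Ht: "H t (Suc k) = H s k + 1" using H_Suc[OF k(2)] k(5) eqk by simp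
    have "H s (Suc k) = H s k" using H_Suc[OF k(1)] k(4) by simp
    moreover have "H t (Suc k) \<le> H t (length t)" using H_mono k(2) by simp
    moreover have "H t (length t) = H s (length s)" using H_total[OF dR] H_total[OF dS] SR by simp
    ultimately have "H s (Suc k) < H s (length s)" using Ht by simp
    then have "\<exists>i. Suc k \<le> i \<and> i < length s \<and> \<not> s ! i" using H_incr[of "Suc k" "length s" s] k by simp
    then obtain i where i: "Suc k \<le> i" "i < length s" "\<not> s ! i" by blast
    define P where "P i = (Suc k \<le> i \<and> i < length s \<and> \<not> s ! i)" for i
    define k2 where "k2 = (LEAST i. P i)"
    have Pk2: "P k2" unfolding k2_def using i by (intro LeastI[of P i]) (simp add: P_def)
    then have k2: "Suc k \<le> k2" "k2 < length s" "\<not> s ! k2" by (auto simp: P_def)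
    have before: "s ! i" if "k \<le> i" "i < k2" for i
    proof (cases "i = k")
      case True then show ?thesis using k by simp
    next
      case False
      have "\<not> P i" using not_less_Least[of i P] that(2) unfolding k2_def by blast
      then show ?thesis using that k2 False by (auto simp: P_def)
    qed
    have k2L: "k2 \<le> length s" using k2 by simp
    have rt: "right_turn s k2" using k2 before[of "k2 - 1"] unfolding right_turn_def by auto
    have mc: "\<not> mcond n R s k2"
      using rt by (auto simp: mcond_def left_turn_def right_turn_def bullet_pt_def circle_pt_def)
    have Hk2: "H s k2 = H s k" using H_const[of k k2 s] k2 before by simp
    have Uk2: "U s k < U s k2" using U_step[of k k2 s] k2 k by simp
    have "ppt n R s k2 \<notin> path_set n S t"
    proof
      assume "ppt n R s k2 \<in> path_set n S t"
      then obtain j where j: "j \<le> length t" "ppt n R s k2 = ppt n R t j"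
        unfolding path_set_ppt SR by auto
      have dS': "pdata n R t" using dS SR by simp
      note ci = cross_inj[OF dR dS' k2L j]
      show False
      proof (cases "k < j")
        case True
        then have "H t (Suc k) \<le> H t j" using H_mono by simp
        then show False using ci(2) Hk2 eqk Ht by simp
      next
        case False
        then have "U t j \<le> U t k" using U_mono by simp
        then show False using ci(1) eqk Uk2 by simp
      qed
    qed
    then show ?thesis using not_minus[OF dR n k2L mc] by blast
  qed
qed


lemma face_subset: "face n F \<Longrightarrow> P \<subseteq> F \<Longrightarrow> face n P"
  unfolding face_def by blast

lemma facet_card_facts:
  assumes F: "F \<in> facets (Delta' n)" and n: "n \<ge> 2"
  shows "face n F" "card F = n - 1" "finite F"
  using facets_char[OF n] F face_fin by auto

lemma new_row:
  assumes d: "pdata n R s" and n: "n \<ge> 2" and x: "x \<in> path_set n R s"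
    and only: "\<forall>y\<in>path_set n R s. snd y = snd x \<longrightarrow> y = x"
    and ne: "path_set n R s \<noteq> {x}"
  shows "\<exists>G\<in>facets (Delta' n). path_set n R s - {x} \<subseteq> G \<and> fst ` G = insert (snd x) R"
proof -
  let ?F = "path_set n R s"
  have Ff: "?F \<in> facets (Delta' n)" using facets_pdata[OF n] d by blast
  note ff = facet_card_facts[OF Ff n]
  note rc = path_rows_cols[OF d n]
  define P where "P = ?F - {x}"
  have fP: "face n P" using face_subset[OF ff(1)] by (simp add: P_def)
  have Pne: "P \<noteq> {}" using ne x by (auto simp: P_def)
  have cP: "card P = n - 2" using ff(2,3) x by (simp add: P_def)
  define t0 where "t0 = snd x"
  have t0n: "t0 \<in> {1..n}" "t0 \<notin> R" using rc(2) x by (auto simp: t0_def)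
  have t0r: "t0 \<notin> fst ` P" using rc(1) t0n(2) by (auto simp: P_def)
  have t0c: "t0 \<notin> snd ` P" using only by (auto simp: P_def t0_def)
  obtain dd where dd: "dd \<in> snd ` P" "face n (insert (t0,dd) P)" using insert_row[OF fP Pne t0n(1) t0r t0c] by blast
  define G where "G = insert (t0,dd) P"
  have nin: "(t0,dd) \<notin> P" using t0r by force
  have finP: "finite P" using face_fin[OF fP] .
  have "card P \<ge> 1" using Pne finP by (simp add: Suc_leI card_gt_0_iff)
  then have cG: "card G = n - 1" using cP nin finP by (simp add: G_def)
  have fG: "face n G" using dd(2) by (simp add: G_def)
  have GF: "G \<in> facets (Delta' n)" using facets_char[OF n] fG cG by simp
  have U: "fst ` G \<union> snd ` G = {1..n}" using face_full_union[OF fG cG n] .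
  have sG: "snd ` G \<subseteq> {1..n} - R"
  proof -
    have "snd ` G = insert dd (snd ` P)" by (simp add: G_def)
    also have "\<dots> = snd ` P" using dd(1) by blast
    also have "\<dots> \<subseteq> snd ` ?F" by (auto simp: P_def)
    finally show ?thesis using rc(2) by simp
  qed
  have "fst ` G \<subseteq> insert t0 R" using rc(1) by (auto simp: G_def P_def)
  moreover have "R \<subseteq> fst ` G"
  proof
    fix r assume r: "r \<in> R"
    then have "r \<in> {1..n}" using d by (auto simp: pdata_def)
    then show "r \<in> fst ` G" using U sG r by blast
  qed
  moreover have "t0 \<in> fst ` G" by (force simp: G_def)
  ultimately have "fst ` G = insert t0 R" by blast
  moreover have "?F - {x} \<subseteq> G" by (auto simp: G_def P_def)
  ultimately show ?thesis using GF t0_def by blast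
qed

lemma new_col:
  assumes d: "pdata n R s" and n: "n \<ge> 2" and x: "x \<in> path_set n R s"
    and only: "\<forall>y\<in>path_set n R s. fst y = fst x \<longrightarrow> y = x"
    and ne: "path_set n R s \<noteq> {x}"
  shows "\<exists>G\<in>facets (Delta' n). path_set n R s - {x} \<subseteq> G \<and> fst ` G = R - {fst x}"
proof -
  let ?F = "path_set n R s"
  have Ff: "?F \<in> facets (Delta' n)" using facets_pdata[OF n] d by blast
  note ff = facet_card_facts[OF Ff n]
  note rc = path_rows_cols[OF d n]
  define P where "P = ?F - {x}"
  have fP: "face n P" using face_subset[OF ff(1)] by (simp add: P_def)
  have Pne: "P \<noteq> {}" using ne x by (auto simp: P_def)
  have cP: "card P = n - 2" using ff(2,3) x by (simp add: P_def)
  define t0 where "t0 = fst x"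
  have t0R: "t0 \<in> R" using rc(1) x by (auto simp: t0_def)
  have t0n: "t0 \<in> {1..n}" using t0R d by (auto simp: pdata_def)
  have t0c: "t0 \<notin> snd ` P" using rc(2) t0R by (auto simp: P_def)
  have t0r: "t0 \<notin> fst ` P" using only by (auto simp: P_def t0_def)
  obtain e where e: "e \<in> fst ` P" "face n (insert (e,t0) P)" using insert_col[OF fP Pne t0n t0r t0c] by blast
  define G where "G = insert (e,t0) P"
  have nin: "(e,t0) \<notin> P" using t0c by force
  have finP: "finite P" using face_fin[OF fP] .
  have "card P \<ge> 1" using Pne finP by (simp add: Suc_leI card_gt_0_iff)
  then have cG: "card G = n - 1" using cP nin finP by (simp add: G_def)
  have fG: "face n G" using e(2) by (simp add: G_def)
  have GF: "G \<in> facets (Delta' n)" using facets_char[OF n] fG cG by simp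
  have U: "fst ` G \<union> snd ` G = {1..n}" using face_full_union[OF fG cG n] .
  have fGe: "fst ` G = fst ` P" using e(1) by (auto simp: G_def)
  have sG: "snd ` G \<subseteq> insert t0 ({1..n} - R)" using rc(2) by (auto simp: G_def P_def)
  have "fst ` G \<subseteq> R - {t0}" using fGe t0r rc(1) by (auto simp: P_def)
  moreover have "R - {t0} \<subseteq> fst ` G"
  proof
    fix r assume r: "r \<in> R - {t0}"
    then have "r \<in> {1..n}" using d by (auto simp: pdata_def)
    then show "r \<in> fst ` G" using U sG r by blast
  qed
  ultimately have "fst ` G = R - {t0}" by blast
  moreover have "?F - {x} \<subseteq> G" by (auto simp: G_def P_def)
  ultimately show ?thesis using GF t0_def by blast
qed

lemma swap_U: "U (A @ [a, b] @ B) j = U (A @ [b, a] @ B) j" if "j \<noteq> Suc (length A)"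
proof (cases "j \<le> length A")
  case True then show ?thesis by (simp add: U_def)
next
  case False
  then have j: "j \<ge> length A + 2" using that by simp
  define m where "m = j - length A - 2"
  have jm: "j = length A + Suc (Suc m)" using j by (simp add: m_def)
  have "take j (A @ [a, b] @ B) = A @ [a, b] @ take m B"
    "take j (A @ [b, a] @ B) = A @ [b, a] @ take m B" unfolding jm by simp_all
  then show ?thesis by (cases a; cases b) (simp_all add: U_def)
qed

lemma swap_H: "H (A @ [a, b] @ B) j = H (A @ [b, a] @ B) j" if "j \<noteq> Suc (length A)"
proof (cases "j \<le> length A")
  case True then show ?thesis by (simp add: H_def)
next
  case False
  then have j: "j \<ge> length A + 2" using that by simp
  define m where "m = j - length A - 2"
  have jm: "j = length A + Suc (Suc m)" using j by (simp add: m_def)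
  have "take j (A @ [a, b] @ B) = A @ [a, b] @ take m B"
    "take j (A @ [b, a] @ B) = A @ [b, a] @ take m B" unfolding jm by simp_all
  then show ?thesis by (cases a; cases b) (simp_all add: H_def)
qed

lemma swap_facet:
  assumes d: "pdata n R s" and k: "0 < k" "k < length s"
  defines "t \<equiv> take (k - 1) s @ [s ! k, s ! (k - 1)] @ drop (k + 1) s"
  shows "pdata n R t" "length t = length s" "take (k - 1) t = take (k - 1) s" "t ! (k - 1) = s ! k"
    "\<And>j. j \<le> length s \<Longrightarrow> j \<noteq> k \<Longrightarrow> ppt n R t j = ppt n R s j"
proof -
  define A where "A = take (k - 1) s"
  define B where "B = drop (k + 1) s"
  have sform: "s = A @ [s ! (k - 1), s ! k] @ B"
  proof -
    have "s = take (k - 1) s @ drop (k - 1) s" by simp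
    also have "drop (k - 1) s = s ! (k - 1) # drop k s" using Cons_nth_drop_Suc[of "k - 1" s] k by simp
    also have "drop k s = s ! k # drop (k + 1) s" using Cons_nth_drop_Suc[of k s] k by simp
    finally show ?thesis by (simp add: A_def B_def)
  qed
  have tform: "t = A @ [s ! k, s ! (k - 1)] @ B" by (simp add: t_def A_def B_def)
  have lA: "length A = k - 1" using k by (simp add: A_def)
  show lt: "length t = length s" using sform tform by (metis length_append list.size(4) length_Cons)
  have cnt: "length (filter id t) = length (filter id s)"
    using sform tform by (metis (no_types) U_len swap_U[of "length t" A] lt lA k le_refl
        One_nat_def Suc_pred nat_less_le)
  show "pdata n R t" using d lt cnt by (simp add: pdata_def is_path_steps_def)
  show "take (k - 1) t = take (k - 1) s" using tform lA by (simp add: A_def)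
  show "t ! (k - 1) = s ! k" using tform lA by (simp add: nth_append)
  fix j assume j: "j \<le> length s" "j \<noteq> k"
  have jj: "j \<noteq> Suc (length A)" using j lA k by simp
  have "U t j = U s j" using swap_U[OF jj, of "s ! k" "s ! (k - 1)" B] sform tform by simp
  moreover have "H t j = H s j" using swap_H[OF jj, of "s ! k" "s ! (k - 1)" B] sform tform by simp
  ultimately show "ppt n R t j = ppt n R s j" by (simp add: ppt_def)
qed

lemma facet_less_pdata:
  assumes dS: "pdata n S t" and dR: "pdata n R s" and n: "n \<ge> 2"
  shows "facet_less n (path_set n S t) (path_set n R s) \<longleftrightarrow> subset_less S R \<or> (S = R \<and> steps_less t s)"
  unfolding facet_less_def block_eq[OF dS n] block_eq[OF dR n] path_of_eq[OF dS n] path_of_eq[OF dR n]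
  by (rule refl)


lemma facet_ne: "G \<in> facets (Delta' n) \<Longrightarrow> n \<ge> 2 \<Longrightarrow> G \<noteq> {}"
  using facets_char[of n G] by auto

lemma exist_minus:
  assumes d: "pdata n R s" and n: "n \<ge> 2" and x: "x \<in> minus_part n (path_set n R s)"
    and ne: "path_set n R s \<noteq> {x}"
  shows "\<exists>G\<in>facets (Delta' n). facet_less n G (path_set n R s) \<and> path_set n R s - {x} \<subseteq> G"
proof -
  let ?F = "path_set n R s"
  note b = pdata_basic[OF d]
  have Rne: "R \<noteq> {}" using d by (simp add: pdata_def)
  obtain k where k: "k \<le> length s" "x = ppt n R s k" "mcond n R s k"
    using x unfolding minus_eq[OF d n] by blast
  have xF: "x \<in> ?F" using k unfolding path_set_ppt by blast
  have fl_new: "facet_less n G ?F" if "G \<in> facets (Delta' n)" "subset_less (fst ` G) R" for G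
    unfolding facet_less_def block_facet[OF that(1) n] block_eq[OF d n] using that(2) by simp
  from k(3) consider (lt) "left_turn s k"
    | (bu) "bullet_pt s (path_walk R s) k" "snd (ppt n R s k) < Max R"
    | (ci) "circle_pt s (path_walk R s) k" "fst (ppt n R s k) = Max R"
    unfolding mcond_def by blast
  then show ?thesis
  proof cases
    case lt
    then have kk: "0 < k" "k < length s" "\<not> s ! (k - 1)" "s ! k" by (auto simp: left_turn_def)
    define t where "t = take (k - 1) s @ [s ! k, s ! (k - 1)] @ drop (k + 1) s"
    note sw = swap_facet[OF d kk(1,2), folded t_def]
    have Gf: "path_set n R t \<in> facets (Delta' n)" using facets_pdata[OF n] sw(1) by blast
    have "steps_less t s" unfolding steps_less_def
      by (rule exI[of _ "k - 1"]) (use sw kk in simp)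
    then have "facet_less n (path_set n R t) ?F" using facet_less_pdata[OF sw(1) d n] by simp
    moreover have "?F - {x} \<subseteq> path_set n R t"
    proof
      fix y assume y: "y \<in> ?F - {x}"
      then obtain j where j: "j \<le> length s" "y = ppt n R s j" unfolding path_set_ppt by blast
      have "j \<noteq> k" using j y k by auto
      then have "y = ppt n R t j" using sw(5)[OF j(1)] j by simp
      then show "y \<in> path_set n R t" unfolding path_set_ppt using j sw(2) by simp
    qed
    ultimately show ?thesis using Gf by blast
  next
    case bu
    have oc: "only_in_col (path_walk R s) k" using bu by (simp add: bullet_pt_def)
    have only: "\<forall>y\<in>?F. snd y = snd x \<longrightarrow> y = x" using col_unique[OF d k(1) oc] k(2) by blast
    obtain G where G: "G \<in> facets (Delta' n)" "?F - {x} \<subseteq> G" "fst ` G = insert (snd x) R"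
      using new_row[OF d n xF only ne] by blast
    have "snd x \<notin> R" using ppt_bounds(4)[OF d k(1)] k(2) by simp
    then have "subset_less (insert (snd x) R) R" using L1[OF b(1) _ _ Rne] bu k(2) by simp
    then have "facet_less n G ?F" using fl_new[OF G(1)] G(3) by simp
    then show ?thesis using G(1,2) by blast
  next
    case ci
    have orr: "only_in_row (path_walk R s) k" using ci by (simp add: circle_pt_def)
    have only: "\<forall>y\<in>?F. fst y = fst x \<longrightarrow> y = x" using row_unique[OF d k(1) orr] k(2) by blast
    obtain G where G: "G \<in> facets (Delta' n)" "?F - {x} \<subseteq> G" "fst ` G = R - {fst x}"
      using new_col[OF d n xF only ne] by blast
    have fx: "fst x = Max R" using ci k(2) by simp
    have "card R \<ge> 2"
    proof -
      obtain g where "g \<in> G" using facet_ne[OF G(1) n] by blast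
      then have "fst g \<in> R" "fst g \<noteq> Max R" using G(3) fx by auto
      then have sub: "{fst g, Max R} \<subseteq> R" and nq: "fst g \<noteq> Max R" using Max_in[OF b(1) Rne] by auto
      have "card {fst g, Max R} = 2" using nq by simp
      then show ?thesis using card_mono[OF b(1) sub] by simp
    qed
    then have "subset_less (R - {Max R}) R" using L2[OF b(1)] by simp
    then have "facet_less n G ?F" using fl_new[OF G(1)] G(3) fx by simp
    then show ?thesis using G(1,2) by blast
  qed
qed

lemma classify:
  assumes d: "pdata n R s" and k: "k \<le> length s" and L: "0 < length s"
    and nl: "\<not> left_turn s k" and nr: "\<not> right_turn s k"
  shows "only_in_col (path_walk R s) k \<or> only_in_row (path_walk R s) k"
proof -
  have "((k = 0 \<or> \<not> s ! (k - 1)) \<and> (k = length s \<or> \<not> s ! k))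
      \<or> ((k = 0 \<or> s ! (k - 1)) \<and> (k = length s \<or> s ! k))"
    using nl nr k L unfolding left_turn_def right_turn_def by (cases "k = 0"; cases "k = length s") auto
  then show ?thesis using oc_iff[OF k] or_iff[OF d k] by blast
qed

lemma exist_plus:
  assumes d: "pdata n R s" and n: "n \<ge> 2" and x: "x \<in> path_set n R s - minus_part n (path_set n R s)"
    and ne: "path_set n R s \<noteq> {x}"
  shows "\<exists>G\<in>facets (Delta' n). facet_less n (path_set n R s) G \<and> path_set n R s - {x} \<subseteq> G"
proof -
  let ?F = "path_set n R s"
  note b = pdata_basic[OF d]
  have Rne: "R \<noteq> {}" using d by (simp add: pdata_def)
  obtain k where k: "k \<le> length s" "x = ppt n R s k" using x unfolding path_set_ppt by blast
  have xF: "x \<in> ?F" using x by blast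
  have nm: "\<not> mcond n R s k" using mem_minus[OF d n k(1)] x k(2) by blast
  have L: "0 < length s"
  proof (rule ccontr)
    assume "\<not> 0 < length s"
    then have L0: "length s = 0" by simp
    then have "?F = {ppt n R s 0}" unfolding path_set_ppt by simp
    then show False using ne k L0 by simp
  qed
  have fl_new: "facet_less n ?F G" if "G \<in> facets (Delta' n)" "subset_less R (fst ` G)" for G
    unfolding facet_less_def block_facet[OF that(1) n] block_eq[OF d n] using that(2) by simp
  have nl: "\<not> left_turn s k" using nm by (simp add: mcond_def)
  show ?thesis
  proof (cases "right_turn s k")
    case True
    then have kk: "0 < k" "k < length s" "s ! (k - 1)" "\<not> s ! k" by (auto simp: right_turn_def)
    define t where "t = take (k - 1) s @ [s ! k, s ! (k - 1)] @ drop (k + 1) s"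
    note sw = swap_facet[OF d kk(1,2), folded t_def]
    have Gf: "path_set n R t \<in> facets (Delta' n)" using facets_pdata[OF n] sw(1) by blast
    have "steps_less s t" unfolding steps_less_def
      by (rule exI[of _ "k - 1"]) (use sw kk in simp)
    then have "facet_less n ?F (path_set n R t)" using facet_less_pdata[OF d sw(1) n] by simp
    moreover have "?F - {x} \<subseteq> path_set n R t"
    proof
      fix y assume y: "y \<in> ?F - {x}"
      then obtain j where j: "j \<le> length s" "y = ppt n R s j" unfolding path_set_ppt by blast
      have "j \<noteq> k" using j y k by auto
      then have "y = ppt n R t j" using sw(5)[OF j(1)] j by simp
      then show "y \<in> path_set n R t" unfolding path_set_ppt using j sw(2) by simp
    qed
    ultimately show ?thesis using Gf by blast
  next
    case nr: False
    from classify[OF d k(1) L nl nr] show ?thesis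
    proof
      assume oc: "only_in_col (path_walk R s) k"
      then have "bullet_pt s (path_walk R s) k" using nl nr by (simp add: bullet_pt_def)
      then have ge: "\<not> snd x < Max R" using nm k(2) by (simp add: mcond_def)
      have sx: "snd x \<notin> R" using ppt_bounds(4)[OF d k(1)] k(2) by simp
      have "Max R \<in> R" using Max_in[OF b(1) Rne] .
      then have "Max R < snd x" using ge sx by (metis linorder_neqE_nat)
      then have all: "\<forall>r\<in>R. r < snd x" using Max_ge[OF b(1)] le_less_trans by blast
      have only: "\<forall>y\<in>?F. snd y = snd x \<longrightarrow> y = x" using col_unique[OF d k(1) oc] k(2) by blast
      obtain G where G: "G \<in> facets (Delta' n)" "?F - {x} \<subseteq> G" "fst ` G = insert (snd x) R"
        using new_row[OF d n xF only ne] by blast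
      have "subset_less R (insert (snd x) R)" using L3[OF b(1) sx all] .
      then have "facet_less n ?F G" using fl_new[OF G(1)] G(3) by simp
    then show ?thesis using G(1,2) by blast
    next
      assume orr: "only_in_row (path_walk R s) k"
      show ?thesis
      proof (cases "only_in_col (path_walk R s) k")
        case True
        then have "bullet_pt s (path_walk R s) k" using nl nr by (simp add: bullet_pt_def)
        then have ge: "\<not> snd x < Max R" using nm k(2) by (simp add: mcond_def)
        have sx: "snd x \<notin> R" using ppt_bounds(4)[OF d k(1)] k(2) by simp
        have "Max R \<in> R" using Max_in[OF b(1) Rne] .
        then have "Max R < snd x" using ge sx by (metis linorder_neqE_nat)
        then have all: "\<forall>r\<in>R. r < snd x" using Max_ge[OF b(1)] le_less_trans by blast
        have only: "\<forall>y\<in>?F. snd y = snd x \<longrightarrow> y = x" using col_unique[OF d k(1) True] k(2) by blast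
        obtain G where G: "G \<in> facets (Delta' n)" "?F - {x} \<subseteq> G" "fst ` G = insert (snd x) R"
          using new_row[OF d n xF only ne] by blast
        have "subset_less R (insert (snd x) R)" using L3[OF b(1) sx all] .
        then have "facet_less n ?F G" using fl_new[OF G(1)] G(3) by simp
    then show ?thesis using G(1,2) by blast
      next
        case False
        then have "circle_pt s (path_walk R s) k" using nl nr orr by (simp add: circle_pt_def)
        then have fx: "fst x \<noteq> Max R" using nm k(2) by (simp add: mcond_def)
        have fR: "fst x \<in> R" using ppt_bounds(3)[OF d k(1)] k(2) by simp
        have only: "\<forall>y\<in>?F. fst y = fst x \<longrightarrow> y = x" using row_unique[OF d k(1) orr] k(2) by blast
        obtain G where G: "G \<in> facets (Delta' n)" "?F - {x} \<subseteq> G" "fst ` G = R - {fst x}"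
          using new_col[OF d n xF only ne] by blast
        have "subset_less R (R - {fst x})" using L4[OF b(1) fR fx] .
        then have "facet_less n ?F G" using fl_new[OF G(1)] G(3) by simp
    then show ?thesis using G(1,2) by blast
      qed
    qed
  qed
qed

lemma GC:
  assumes M: "M \<subseteq> F" and miss: "\<forall>G\<in>X. \<exists>x\<in>M. x \<notin> G"
    and ex: "\<forall>x\<in>M. \<exists>G\<in>X. F - {x} \<subseteq> G"
  shows "gen_complex {F} \<inter> gen_complex X = gen_complex {F - {x} | x. x \<in> M}"
proof (intro set_eqI iffI)
  fix Hs assume "Hs \<in> gen_complex {F} \<inter> gen_complex X"
  then have h: "Hs \<subseteq> F" "\<exists>G\<in>X. Hs \<subseteq> G" unfolding gen_complex_def by auto
  then obtain G where G: "G \<in> X" "Hs \<subseteq> G" by blast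
  then obtain x where "x \<in> M" "x \<notin> G" using miss by blast
  then have "Hs \<subseteq> F - {x}" using h G by blast
  then show "Hs \<in> gen_complex {F - {x} | x. x \<in> M}" unfolding gen_complex_def using \<open>x \<in> M\<close> by blast
next
  fix Hs assume "Hs \<in> gen_complex {F - {x} | x. x \<in> M}"
  then obtain x where x: "x \<in> M" "Hs \<subseteq> F - {x}" unfolding gen_complex_def by blast
  then obtain G where "G \<in> X" "F - {x} \<subseteq> G" using ex by blast
  then show "Hs \<in> gen_complex {F} \<inter> gen_complex X" unfolding gen_complex_def using x by blast
qed

theorem proposition4p7:
  fixes n :: nat
  assumes "n \<ge> 2"
  shows "(\<forall>F\<in>facets (Delta' n). (\<exists>G\<in>facets (Delta' n). facet_less n G F) \<longrightarrow>
            gen_complex {F} \<inter> gen_complex {G \<in> facets (Delta' n). facet_less n G F}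
              = gen_complex {F - {x} | x. x \<in> minus_part n F})
       \<and> (\<forall>F\<in>facets (Delta' n). (\<exists>G\<in>facets (Delta' n). facet_less n F G) \<longrightarrow>
            gen_complex {F} \<inter> gen_complex {G \<in> facets (Delta' n). facet_less n F G}
              = gen_complex {F - {x} | x. x \<in> plus_part n F})"
proof (intro conjI ballI impI)
  note n = assms
  fix F assume F: "F \<in> facets (Delta' n)" and ex: "\<exists>G\<in>facets (Delta' n). facet_less n G F"
  obtain R s where d: "pdata n R s" and Fe: "F = path_set n R s" using facets_pdata[OF n] F by blast
  show "gen_complex {F} \<inter> gen_complex {G \<in> facets (Delta' n). facet_less n G F}
              = gen_complex {F - {x} | x. x \<in> minus_part n F}"
  proof (rule GC)
    show "minus_part n F \<subseteq> F"
    proof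
      fix y assume "y \<in> minus_part n F"
      then obtain k where "k \<le> length s" "y = ppt n R s k" unfolding Fe minus_eq[OF d n] by blast
      then show "y \<in> F" unfolding Fe path_set_ppt by blast
    qed
    show "\<forall>G\<in>{G \<in> facets (Delta' n). facet_less n G F}. \<exists>x\<in>minus_part n F. x \<notin> G"
    proof
      fix G assume G: "G \<in> {G \<in> facets (Delta' n). facet_less n G F}"
      then obtain S t where dS: "pdata n S t" and Ge: "G = path_set n S t" using facets_pdata[OF n] by blast
      have "subset_less S R \<or> (S = R \<and> steps_less t s)" using G facet_less_pdata[OF dS d n] Fe Ge by simp
      then show "\<exists>x\<in>minus_part n F. x \<notin> G" using miss_minus[OF d dS n] Fe Ge by simp
    qed
    show "\<forall>x\<in>minus_part n F. \<exists>G\<in>{G \<in> facets (Delta' n). facet_less n G F}. F - {x} \<subseteq> G"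
    proof
      fix x assume x: "x \<in> minus_part n F"
      show "\<exists>G\<in>{G \<in> facets (Delta' n). facet_less n G F}. F - {x} \<subseteq> G"
      proof (cases "F = {x}")
        case True then show ?thesis using ex by auto
      next
        case False
        have "\<exists>G\<in>facets (Delta' n). facet_less n G (path_set n R s) \<and> path_set n R s - {x} \<subseteq> G"
          by (rule exist_minus[OF d n]) (use x False Fe in simp_all)
        then show ?thesis using Fe by blast
      qed
    qed
  qed
next
  note n = assms
  fix F assume F: "F \<in> facets (Delta' n)" and ex: "\<exists>G\<in>facets (Delta' n). facet_less n F G"
  obtain R s where d: "pdata n R s" and Fe: "F = path_set n R s" using facets_pdata[OF n] F by blast
  show "gen_complex {F} \<inter> gen_complex {G \<in> facets (Delta' n). facet_less n F G}
              = gen_complex {F - {x} | x. x \<in> plus_part n F}"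
  proof (rule GC)
    show "plus_part n F \<subseteq> F" unfolding plus_part_def by blast
    show "\<forall>G\<in>{G \<in> facets (Delta' n). facet_less n F G}. \<exists>x\<in>plus_part n F. x \<notin> G"
    proof
      fix G assume G: "G \<in> {G \<in> facets (Delta' n). facet_less n F G}"
      then obtain S t where dS: "pdata n S t" and Ge: "G = path_set n S t" using facets_pdata[OF n] by blast
      have "subset_less R S \<or> (R = S \<and> steps_less s t)" using G facet_less_pdata[OF d dS n] Fe Ge by simp
      then show "\<exists>x\<in>plus_part n F. x \<notin> G" using miss_plus[OF d dS n] Fe Ge by (simp add: plus_part_def)
    qed
    show "\<forall>x\<in>plus_part n F. \<exists>G\<in>{G \<in> facets (Delta' n). facet_less n F G}. F - {x} \<subseteq> G"
    proof
      fix x assume x: "x \<in> plus_part n F"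
      show "\<exists>G\<in>{G \<in> facets (Delta' n). facet_less n F G}. F - {x} \<subseteq> G"
      proof (cases "F = {x}")
        case True then show ?thesis using ex by auto
      next
        case False
        have "\<exists>G\<in>facets (Delta' n). facet_less n (path_set n R s) G \<and> path_set n R s - {x} \<subseteq> G"
          by (rule exist_plus[OF d n]) (use x False Fe in \<open>simp_all add: plus_part_def\<close>)
        then show ?thesis using Fe by blast
      qed
    qed
  qed
qed


end
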